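(* Let $n\ge2$, $b_1,\dots,b_n\in\mathbb{R}^d$ with $\|b_i\|\le R'$ ($R'>0$), $B=\frac1n[b_1,\dots,b_n]^T$, each $g_i^*:\mathbb{R}\to\mathbb{R}\cup\{+\infty\}$ proper, lower semicontinuous, convex, $g^*(y)=\frac1n\sum_ig_i^*(y_i)$, and $\ell:\mathbb{R}^d\to\mathbb{R}\cup\{+\infty\}$ proper, lower semicontinuous, $\sigma$-strongly convex ($\sigma\ge0$). For the VRPDA$^2$ algorithm in the context, for all $k\ge2$ and all $(u,v)\in\mathcal{X}\times\mathcal{Y}$, with expectation taken over all randomness of the algorithm, $$\begin{aligned}\mathbb{E}[\psi_k(y_k)]\ge\mathbb{E}\Big[&\psi_{k-1}(y_{k-1})+\frac n2\|y_k-y_{k-1}\|^2+a_kg^*_{j_k}(y_{k,j_k})\\&+a_k\langle B(x_k-x_{k-1}),y_k-v\rangle-a_{k-1}\langle B(x_{k-1}-x_{k-2}),y_{k-1}-v\rangle\\&-na_{k-1}\langle B(x_{k-1}-x_{k-2}),y_k-y_{k-1}\rangle+a_k\langle-Bx_k,y_k-v\rangle\\&-(n-1)a_k\big(\langle B(x_{k-1}-u),y_k-y_{k-1}\rangle+\langle Bu,y_k-y_{k-1}\rangle\big)\Big],\end{aligned}$$ $$\mathbb{E}[\phi_k(x_k)]\ge\mathbb{E}\Big[\phi_{k-1}(x_{k-1})+\frac{n+\sigma A_{k-1}}{2}\|x_k-x_{k-1}\|^2+a_k\big(\langle x_k-u,B^Ty_k\rangle+(n-1)\langle x_k-u,B^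T(y_k-y_{k-1})\rangle+\ell(x_k)\big)\Big].$$
   Context: Norms are Euclidean; $\sigma$-strong convexity of $f$ means $f((1-\alpha)x+\alpha\hat x)\le(1-\alpha)f(x)+\alpha f(\hat x)-\frac\sigma2\alpha(1-\alpha)\|\hat x-x\|^2$. $\mathcal{X}=\mathrm{dom}(\ell)$, $\mathcal{Y}=\mathrm{dom}(g^* )$; $y_{k,j}$ is the $j$-th coordinate of $y_k$. VRPDA$^2$ algorithm: given $(x_0,y_0),(u,v)\in\mathcal{X}\times\mathcal{Y}$: $\phi_0(x)=\frac12\|x-x_0\|^2$, $\psi_0(y)=\frac12\|y-y_0\|^2$, $a_0=A_0=0$, $\tilde a_1=\frac1{2R'}$; $\tilde\psi_1(y)=\psi_0(y)+\tilde a_1(\langle-Bx_0,y-v\rangle+g^*(y))$, $y_1=\arg\min\tilde\psi_1$; $z_1=B^Ty_1$; $\tilde\phi_1(x)=\phi_0(x)+\tilde a_1(\langle x-u,z_1\rangle+\ell(x))$, $x_1=\arg\min\tilde\phi_1$; $\psi_1=n\tilde\psi_1$, $\phi_1=n\tilde\phi_1$, $a_1=A_1=n\tilde a_1$, $a_2=\frac{a_1}{n-1}$, $A_2=A_1+a_2$. For $k=2,3,\dots$: $\bar x_{k-1}=x_{k-1}+\frac{a_{k-1}}{a_k}(x_{k-1}-x_{k-2})$; pick $j_k$ uniformly at random from $\{1,\dots,n\}$, independently of the past; $\psi_k(y)=\psi_{k-1}(y)+a_k(-b_{j_k}^T\bar x_{k-1}(y_{j_k}-v_{j_k})+g^*_{j_k}(y_{j_k}))$,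 $y_k=\arg\min_y\psi_k(y)$; $\phi_k(x)=\phi_{k-1}(x)+a_k(\langle x-u,z_{k-1}+(y_{k,j_k}-y_{k-1,j_k})b_{j_k}\rangle+\ell(x))$, $x_k=\arg\min_x\phi_k(x)$; $z_k=z_{k-1}+\frac1n(y_{k,j_k}-y_{k-1,j_k})b_{j_k}$; $a_{k+1}=\min\{(1+\frac1{n-1})a_k,\frac{\sqrt{n(n+\sigma A_k)}}{2R'}\}$, $A_{k+1}=A_k+a_{k+1}$. *)

theory Defs
  imports "HOL-Analysis.Analysis" "HOL-Library.Extended_Real"
begin

definition proper_fun :: "('a \<Rightarrow> ereal) \<Rightarrow> bool" where
  "proper_fun f \<longleftrightarrow> (\<forall>x. f x \<noteq> -\<infinity>) \<and> (\<exists>x. f x \<noteq> \<infinity>)"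

definition lsc_fun :: "('a::topological_space \<Rightarrow> ereal) \<Rightarrow> bool" where
  "lsc_fun f \<longleftrightarrow> (\<forall>x. f x \<le> Liminf (at x) f)"

definition convex_fun :: "('a::real_vector \<Rightarrow> ereal) \<Rightarrow> bool" where
  "convex_fun f \<longleftrightarrow> (\<forall>x y \<alpha>. 0 < \<alpha> \<and> \<alpha> < 1 \<longrightarrow>
      f ((1 - \<alpha>) *\<^sub>R x + \<alpha> *\<^sub>R y) \<le> ereal (1 - \<alpha>) * f x + ereal \<alpha> * f y)"

definition strongly_convex_fun :: "real \<Rightarrow> ('a::real_normed_vector \<Rightarrow> ereal) \<Rightarrow> bool" where
  "strongly_convex_fun \<sigma> f \<longleftrightarrow> (\<forall>x y \<alpha>. 0 < \<alpha> \<and> \<alpha> < 1 \<longrightarrow>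
      f ((1 - \<alpha>) *\<^sub>R x + \<alpha> *\<^sub>R y) \<le> ereal (1 - \<alpha>) * f x + ereal \<alpha> * f y
        - ereal (\<sigma> / 2 * \<alpha> * (1 - \<alpha>) * (norm (y - x))\<^sup>2))"

definition argmin_of :: "('a \<Rightarrow> ereal) \<Rightarrow> 'a" where
  "argmin_of F = (SOME x. \<forall>z. F x \<le> F z)"

text \<open>The index set {1..n} is the finite type 'n, so n = CARD('n); R^d is real^'d.
  B = (1/n)[b_1,...,b_n]^T, i.e. (B x)_i = <b_i, x>/n, and B^T y = (1/n) sum_i y_i b_i.\<close>

definition Bop :: "('n::finite \<Rightarrow> real^'d) \<Rightarrow> real^'d \<Rightarrow> real^'n" where
  "Bop b x = (\<chi> i. inner (b i) x / real CARD('n))"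

definition BTop :: "('n::finite \<Rightarrow> real^'d) \<Rightarrow> real^'n \<Rightarrow> real^'d" where
  "BTop b y = (\<Sum>i\<in>UNIV. (y $ i / real CARD('n)) *\<^sub>R b i)"

definition gstar :: "('n::finite \<Rightarrow> real \<Rightarrow> ereal) \<Rightarrow> real^'n \<Rightarrow> ereal" where
  "gstar gs y = (\<Sum>i\<in>UNIV. gs i (y $ i)) / ereal (real CARD('n))"

text \<open>stepsz n sigma R k = (a_k, A_k). a_0 = A_0 = 0, a_1 = A_1 = n/(2R'), a_2 = a_1/(n-1),
  and a_{k+1} = min((1+1/(n-1)) a_k, sqrt(n(n+sigma A_k))/(2R')) for k >= 2.\<close>
fun stepsz :: "real \<Rightarrow> real \<Rightarrow> real \<Rightarrow> nat \<Rightarrow> real \<times> real" where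
  "stepsz n \<sigma> R 0 = (0, 0)"
| "stepsz n \<sigma> R (Suc 0) = (n / (2 * R), n / (2 * R))"
| "stepsz n \<sigma> R (Suc (Suc 0)) =
     (let a1 = n / (2 * R) in (a1 / (n - 1), a1 + a1 / (n - 1)))"
| "stepsz n \<sigma> R (Suc (Suc (Suc k))) =
     (let (ak, Ak) = stepsz n \<sigma> R (Suc (Suc k));
          a' = min ((1 + 1 / (n - 1)) * ak) (sqrt (n * (n + \<sigma> * Ak)) / (2 * R))
      in (a', Ak + a'))"

record ('d, 'n) vstate =
  xs :: "real^'d"
  ys :: "real^'n"
  zs :: "real^'d"
  phis :: "real^'d \<Rightarrow> ereal"
  psis :: "real^'n \<Rightarrow> ereal"

text \<open>vrpda b gs l sigma R x0 y0 u v j k is the state after iteration k, where j k is the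
  coordinate j_k sampled at iteration k (only j 2, j 3, ... are used).\<close>
fun vrpda :: "('n::finite \<Rightarrow> real^'d) \<Rightarrow> ('n \<Rightarrow> real \<Rightarrow> ereal) \<Rightarrow> (real^'d \<Rightarrow> ereal)
   \<Rightarrow> real \<Rightarrow> real \<Rightarrow> real^'d \<Rightarrow> real^'n \<Rightarrow> real^'d \<Rightarrow> real^'n \<Rightarrow> (nat \<Rightarrow> 'n) \<Rightarrow> nat
   \<Rightarrow> ('d, 'n) vstate" where
  "vrpda b gs l \<sigma> R x0 y0 u v j 0 =
     \<lparr> xs = x0, ys = y0, zs = 0,
       phis = (\<lambda>x. ereal ((norm (x - x0))\<^sup>2 / 2)),
       psis = (\<lambda>y. ereal ((norm (y - y0))\<^sup>2 / 2)) \<rparr>"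
| "vrpda b gs l \<sigma> R x0 y0 u v j (Suc 0) =
     (let n = real CARD('n); ta = 1 / (2 * R);
          tpsi = (\<lambda>y. ereal ((norm (y - y0))\<^sup>2 / 2)
                   + ereal ta * (ereal (inner (- Bop b x0) (y - v)) + gstar gs y));
          y1 = argmin_of tpsi;
          z1 = BTop b y1;
          tphi = (\<lambda>x. ereal ((norm (x - x0))\<^sup>2 / 2)
                   + ereal ta * (ereal (inner (x - u) z1) + l x));
          x1 = argmin_of tphi
      in \<lparr> xs = x1, ys = y1, zs = z1,
           phis = (\<lambda>x. ereal n * tphi x), psis = (\<lambda>y. ereal n * tpsi y) \<rparr>)"
| "vrpda b gs l \<sigma> R x0 y0 u v j (Suc (Suc k)) =
     (let n = real CARD('n);
          S1 = vrpda b gs l \<sigma> R x0 y0 u v j (Suc k);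
          S2 = vrpda b gs l \<sigma> R x0 y0 u v j k;
          a = fst (stepsz n \<sigma> R (Suc (Suc k)));
          a' = fst (stepsz n \<sigma> R (Suc k));
          xbar = xs S1 + (a' / a) *\<^sub>R (xs S1 - xs S2);
          jk = j (Suc (Suc k));
          psi = (\<lambda>y. psis S1 y + ereal a * (ereal (- inner (b jk) xbar * (y $ jk - v $ jk))
                                             + gs jk (y $ jk)));
          yk = argmin_of psi;
          dk = yk $ jk - ys S1 $ jk;
          phi = (\<lambda>x. phis S1 x + ereal a * (ereal (inner (x - u) (zs S1 + dk *\<^sub>R b jk)) + l x));
          xk = argmin_of phi;
          zk = zs S1 + (dk / n) *\<^sub>R b jk
      in \<lparr> xs = xk, ys = yk, zs = zk, phis = phi, psis = psi \<rparr>)"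

text \<open>The quantities at iteration k depend only on j_2,...,j_k, which are i.i.d. uniform on
  the index set; the expectation is the uniform average over all these choices.\<close>
definition expect_upto :: "nat \<Rightarrow> ((nat \<Rightarrow> 'n::finite) \<Rightarrow> ereal) \<Rightarrow> ereal" where
  "expect_upto k F = (\<Sum>js\<in>PiE {2..k} (\<lambda>_. UNIV). F js)
                     / ereal (real (card (PiE {2..k} (\<lambda>_. (UNIV :: 'n set)))))"

end

theory Submission
  imports Defs
begin

lemma lim_alpha_aux:
  fixes Z Y c :: real
  assumes h: "\<And>\<alpha>. 0 < \<alpha> \<Longrightarrow> \<alpha> < 1 \<Longrightarrow> Z + c * (1 - \<alpha>) \<le> Y" and c: "c \<ge> 0"
  shows "Z + c \<le> Y"
proof (rule field_le_epsilon)
  fix e :: real assume e: "0 < e"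
  define \<alpha> where "\<alpha> = min (1/2) (e / (c + 1))"
  have a0: "0 < \<alpha>" "\<alpha> < 1" using e c by (auto simp: \<alpha>_def)
  have "c * \<alpha> \<le> c * (e / (c + 1))" unfolding \<alpha>_def using c by (intro mult_left_mono) auto
  also have "\<dots> \<le> e" using c e by (simp add: field_simps)
  finally have "c * \<alpha> \<le> e" .
  with h[OF a0] show "Z + c \<le> Y + e" by (simp add: algebra_simps)
qed

lemma sc_min_growth:
  fixes F :: "'a::real_normed_vector \<Rightarrow> ereal"
  assumes sc: "strongly_convex_fun m F" and m: "m \<ge> 0"
    and fz: "F z \<noteq> \<infinity>" "F z \<noteq> -\<infinity>" and mn: "\<And>w. F z \<le> F w"
  shows "F z + ereal (m/2 * (norm (y - z))\<^sup>2) \<le> F y"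
proof (cases "F y = \<infinity>")
  case True then show ?thesis by simp
next
  case False
  have "F y \<noteq> -\<infinity>" using mn[of y] fz by auto
  with False obtain Y where Y: "F y = ereal Y" by (cases "F y") auto
  from fz obtain Z where Z: "F z = ereal Z" by (cases "F z") auto
  have "Z + m/2 * (norm (y - z))\<^sup>2 * (1 - \<alpha>) \<le> Y" if a: "0 < \<alpha>" "\<alpha> < 1" for \<alpha>
  proof -
    have "F z \<le> F ((1 - \<alpha>) *\<^sub>R z + \<alpha> *\<^sub>R y)" by (rule mn)
    also have "\<dots> \<le> ereal (1 - \<alpha>) * F z + ereal \<alpha> * F y
        - ereal (m / 2 * \<alpha> * (1 - \<alpha>) * (norm (y - z))\<^sup>2)"
      using sc a unfolding strongly_convex_fun_def by blast
    finally have "Z \<le> (1 - \<alpha>) * Z + \<alpha> * Y - m / 2 * \<alpha> * (1 - \<alpha>) * (norm (y - z))\<^sup>2"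
      using Y Z by simp
    then have "\<alpha> * (Z + m/2 * (norm (y - z))\<^sup>2 * (1 - \<alpha>)) \<le> \<alpha> * Y"
      by (simp add: algebra_simps)
    then show ?thesis using a by simp
  qed
  then have "Z + m/2 * (norm (y - z))\<^sup>2 \<le> Y"
  proof (rule lim_alpha_aux)
    show "0 \<le> m / 2 * (norm (y - z))\<^sup>2" using m by simp
  qed
  then show ?thesis using Y Z by simp
qed


lemma lsc_near:
  fixes F :: "'a::metric_space \<Rightarrow> ereal"
  assumes lsc: "lsc_fun F" and c: "c < F z"
  shows "\<exists>d>0. \<forall>y. dist y z < d \<longrightarrow> c < F y"
proof -
  have "F z \<le> Liminf (at z) F" using lsc unfolding lsc_fun_def by blast
  then have "eventually (\<lambda>y. c < F y) (at z)" using c by (simp add: le_Liminf_iff)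
  then obtain d where d: "d > 0" "\<forall>y. y \<noteq> z \<and> dist y z < d \<longrightarrow> c < F y"
    unfolding eventually_at by auto
  show ?thesis using d c by (intro exI[of _ d]) auto
qed

lemma sq_bound_aux:
  fixes m d r :: real
  assumes "m > 0" "d > 0"
  shows "m/4 * r\<^sup>2 - 2 * r / d \<ge> - 4 / (m * d\<^sup>2)"
proof -
  have "0 \<le> m/4 * (r - 4/(m*d))\<^sup>2" using assms by simp
  also have "m/4 * (r - 4/(m*d))\<^sup>2 = m/4 * r\<^sup>2 - 2 * r / d + 4 / (m * d\<^sup>2)"
    using assms by (simp add: power2_eq_square field_simps)
  finally show ?thesis by simp
qed

lemma sc_lower_bound:
  fixes F :: "'a::real_normed_vector \<Rightarrow> ereal"
  assumes sc: "strongly_convex_fun m F" and m: "m > 0"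
    and nm: "\<And>x. F x \<noteq> -\<infinity>" and P: "F p = ereal P"
    and d: "d > 0" and near: "\<And>y. dist y p < d \<Longrightarrow> ereal (P - 1) < F y"
  shows "ereal (P - 1 - 4 / (m * d\<^sup>2)) \<le> F x"
proof (cases "F x")
  case PInf then show ?thesis by simp
next
  case MInf then show ?thesis using nm by simp
next
  case (real X)
  have lb0: "0 \<le> 4 / (m * d\<^sup>2)" using m d by simp
  show ?thesis
  proof (cases "norm (x - p) < d")
    case True
    then have "ereal (P - 1) < F x" using near[of x] by (simp add: dist_norm)
    then have "P - 1 < X" using real by simp
    then show ?thesis unfolding real ereal_less_eq(3) using lb0 by linarith
  next
    case False
    define r where "r = norm (x - p)"
    have r: "r \<ge> d" using False r_def by simp
    then have rpos: "r > 0" using d by simp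
    define \<alpha> where "\<alpha> = d / (2 * r)"
    have a: "0 < \<alpha>" "\<alpha> \<le> 1/2" using d r rpos by (auto simp: \<alpha>_def field_simps)
    define w where "w = (1 - \<alpha>) *\<^sub>R p + \<alpha> *\<^sub>R x"
    have "w - p = \<alpha> *\<^sub>R (x - p)" by (simp add: w_def algebra_simps)
    then have "dist w p = \<alpha> * r" using a by (simp add: dist_norm r_def)
    also have "\<alpha> * r = d / 2" using rpos by (simp add: \<alpha>_def)
    finally have "dist w p < d" using d by simp
    then have "ereal (P - 1) < F w" by (rule near)
    also have "F w \<le> ereal (1 - \<alpha>) * F p + ereal \<alpha> * F x - ereal (m / 2 * \<alpha> * (1 - \<alpha>) * (norm (x - p))\<^sup>2)"
      using sc a unfolding strongly_convex_fun_def w_def by auto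
    finally have "P - 1 < (1 - \<alpha>) * P + \<alpha> * X - m / 2 * \<alpha> * (1 - \<alpha>) * r\<^sup>2"
      using P real by (simp add: r_def)
    then have "\<alpha> * (P - 1 / \<alpha> + m / 2 * (1 - \<alpha>) * r\<^sup>2) < \<alpha> * X"
      using a by (simp add: algebra_simps)
    then have h1: "P - 1 / \<alpha> + m / 2 * (1 - \<alpha>) * r\<^sup>2 < X" using a by simp
    have "1 / \<alpha> = 2 * r / d" using d rpos by (simp add: \<alpha>_def)
    moreover have "m / 4 * r\<^sup>2 \<le> m / 2 * (1 - \<alpha>) * r\<^sup>2"
    proof -
      have "m/4 * r\<^sup>2 = m/2 * (1/2) * r\<^sup>2" by simp
      also have "\<dots> \<le> m/2 * (1 - \<alpha>) * r\<^sup>2" using a m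
        by (intro mult_right_mono mult_left_mono) auto
      finally show ?thesis .
    qed
    ultimately have "P + (m/4 * r\<^sup>2 - 2 * r / d) < X" using h1 by linarith
    moreover have "m/4 * r\<^sup>2 - 2 * r / d \<ge> - 4 / (m * d\<^sup>2)" using m d by (rule sq_bound_aux)
    ultimately show ?thesis using real by simp
  qed
qed

lemma sc_min_exists:
  fixes F :: "'a::euclidean_space \<Rightarrow> ereal"
  assumes lsc: "lsc_fun F" and sc: "strongly_convex_fun m F" and m: "m > 0"
    and nm: "\<And>x. F x \<noteq> -\<infinity>" and p: "F p \<noteq> \<infinity>"
  shows "\<exists>z. F z \<noteq> \<infinity> \<and> F z \<noteq> -\<infinity> \<and> (\<forall>w. F z \<le> F w)"
proof -
  obtain P where P: "F p = ereal P" using p nm[of p] by (cases "F p") auto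
  have "ereal (P - 1) < F p" using P by simp
  from lsc_near[OF lsc this] obtain d where d: "d > 0" "\<And>y. dist y p < d \<Longrightarrow> ereal (P - 1) < F y"
    by blast
  define L where "L = P - 1 - 4 / (m * d\<^sup>2)"
  have LB: "\<And>x. ereal L \<le> F x" unfolding L_def by (rule sc_lower_bound[OF sc m nm P d])
  define I where "I = Inf (range F)"
  have "ereal L \<le> I" unfolding I_def using LB by (auto intro: Inf_greatest)
  moreover have "I \<le> F p" unfolding I_def by (auto intro: Inf_lower)
  ultimately obtain Ir where Ir: "I = ereal Ir" using P by (cases I) auto
  have IF: "\<And>w. I \<le> F w" unfolding I_def by (auto intro: Inf_lower)
  have "\<exists>x. F x < ereal (Ir + 1 / (real k + 1))" for k :: nat
  proof -
    have "I < ereal (Ir + 1 / (real k + 1))" using Ir by simp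
    then show ?thesis unfolding I_def by (simp add: Inf_less_iff)
  qed
  then obtain X where X: "\<And>k. F (X k) < ereal (Ir + 1 / (real k + 1))" by metis
  have Xr: "Ir \<le> real_of_ereal (F (X k)) \<and> real_of_ereal (F (X k)) < Ir + 1 / (real k + 1)
      \<and> F (X k) = ereal (real_of_ereal (F (X k)))" for k
  proof -
    have "ereal Ir \<le> F (X k)" using IF Ir by metis
    with X[of k] show ?thesis by (cases "F (X k)") auto
  qed
  have cauchy_est: "(norm (X k - X l))\<^sup>2 < 4 / m * (1 / (real k + 1) + 1 / (real l + 1))" for k l
  proof -
    define fk where "fk = real_of_ereal (F (X k))"
    define fl where "fl = real_of_ereal (F (X l))"
    have ek: "F (X k) = ereal fk" using Xr[of k] unfolding fk_def by blast
    have el: "F (X l) = ereal fl" using Xr[of l] unfolding fl_def by blast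
    have "I \<le> F ((1 - 1/2) *\<^sub>R X k + (1/2) *\<^sub>R X l)" by (rule IF)
    also have "\<dots> \<le> ereal (1 - 1/2) * F (X k) + ereal (1/2) * F (X l)
        - ereal (m / 2 * (1/2) * (1 - 1/2) * (norm (X l - X k))\<^sup>2)"
      using sc unfolding strongly_convex_fun_def by (intro sc[unfolded strongly_convex_fun_def, rule_format]) simp
    finally have "Ir \<le> fk / 2 + fl / 2 - m / 8 * (norm (X l - X k))\<^sup>2"
      unfolding ek el Ir by simp
    moreover have "fk < Ir + 1 / (real k + 1)" "fl < Ir + 1 / (real l + 1)"
      using Xr[of k] Xr[of l] unfolding fk_def fl_def by auto
    ultimately have "m * (norm (X l - X k))\<^sup>2 < 4 * (1 / (real k + 1) + 1 / (real l + 1))"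
      using mult.assoc[of m "1/8" "(norm (X l - X k))\<^sup>2"] by (simp add: mult.commute)
    then have "(norm (X k - X l))\<^sup>2 * m < 4 * (1 / (real k + 1) + 1 / (real l + 1))"
      by (simp add: norm_minus_commute mult.commute)
    then have "(norm (X k - X l))\<^sup>2 < 4 * (1 / (real k + 1) + 1 / (real l + 1)) / m"
      using m by (simp only: pos_less_divide_eq)
    then show ?thesis by simp
  qed
  have cauchy: "Cauchy X"
  proof (rule metric_CauchyI)
    fix e :: real assume e: "0 < e"
    obtain M :: nat where M: "inverse (real (Suc M)) < m * e\<^sup>2 / 8"
      using reals_Archimedean[of "m * e\<^sup>2 / 8"] e m by auto
    show "\<exists>M. \<forall>k\<ge>M. \<forall>l\<ge>M. dist (X k) (X l) < e"
    proof (intro exI allI impI)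
      fix k l assume kl: "M \<le> k" "M \<le> l"
      have "1 / (real k + 1) \<le> 1 / (real M + 1)" "1 / (real l + 1) \<le> 1 / (real M + 1)"
        using kl by (auto simp: field_simps)
      then have "4 / m * (1 / (real k + 1) + 1 / (real l + 1)) \<le> 4 / m * (2 / (real M + 1))"
        using m by (intro mult_left_mono) auto
      also have "\<dots> = 8 / (m * (real M + 1))" by simp
      also have "\<dots> < e\<^sup>2"
      proof -
        have pos: "0 < m * (real M + 1)" using m by simp
        have "8 < e\<^sup>2 * (m * (real M + 1))" using M m by (simp add: field_simps inverse_eq_divide)
        then show ?thesis by (simp add: pos_divide_less_eq[OF pos])
      qed
      finally have "(norm (X k - X l))\<^sup>2 < e\<^sup>2" using cauchy_est[of k l] by linarith
      then show "dist (X k) (X l) < e" using e by (simp add: dist_norm power_less_imp_less_base)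
    qed
  qed
  then obtain z where z: "X \<longlonglongrightarrow> z" using Cauchy_convergent_iff convergent_def by blast
  have Fz: "F z \<le> I"
  proof (rule ccontr)
    assume "\<not> F z \<le> I"
    then have "I < F z" by simp
    then obtain c where c: "I < ereal c" "ereal c < F z" using ereal_dense2 by blast
    from lsc_near[OF lsc c(2)] obtain \<delta> where dl: "\<delta> > 0" "\<And>y. dist y z < \<delta> \<Longrightarrow> ereal c < F y"
      by blast
    obtain K1 where K1: "\<And>k. k \<ge> K1 \<Longrightarrow> dist (X k) z < \<delta>"
      using z dl(1) unfolding lim_sequentially by blast
    have cI: "0 < c - Ir" using c Ir by simp
    obtain K2 :: nat where K2: "inverse (real (Suc K2)) < c - Ir"
      using reals_Archimedean[OF cI] by auto
    define k where "k = max K1 K2"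
    have "ereal c < F (X k)" using dl(2) K1 k_def by simp
    also have "F (X k) < ereal (Ir + 1 / (real k + 1))" by (rule X)
    also have "1 / (real k + 1) \<le> inverse (real (Suc K2))"
      unfolding k_def by (simp add: field_simps inverse_eq_divide)
    then have "ereal (Ir + 1 / (real k + 1)) \<le> ereal c" using K2 by simp
    finally show False by simp
  qed
  show ?thesis
  proof (intro exI conjI allI)
    show "F z \<noteq> \<infinity>" using Fz Ir by auto
    show "F z \<noteq> -\<infinity>" by (rule nm)
    show "F z \<le> F w" for w using Fz IF[of w] by simp
  qed
qed

lemma quad_identity0:
  fixes u w :: "'a::real_inner" and \<alpha> :: real
  shows "(norm ((1 - \<alpha>) *\<^sub>R u + \<alpha> *\<^sub>R w))\<^sup>2
     = (1 - \<alpha>) * (norm u)\<^sup>2 + \<alpha> * (norm w)\<^sup>2 - \<alpha> * (1 - \<alpha>) * (norm (w - u))\<^sup>2"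
  unfolding power2_norm_eq_inner
  by (simp add: inner_add_left inner_add_right inner_diff_left inner_diff_right
        inner_commute algebra_simps)

lemma quad_identity:
  fixes x y x0 :: "'a::real_inner" and n \<alpha> :: real
  shows "n/2 * (norm ((1 - \<alpha>) *\<^sub>R x + \<alpha> *\<^sub>R y - x0))\<^sup>2
     = (1 - \<alpha>) * (n/2 * (norm (x - x0))\<^sup>2) + \<alpha> * (n/2 * (norm (y - x0))\<^sup>2)
       - n / 2 * \<alpha> * (1 - \<alpha>) * (norm (y - x))\<^sup>2"
proof -
  have e: "(1 - \<alpha>) *\<^sub>R x + \<alpha> *\<^sub>R y - x0 = (1 - \<alpha>) *\<^sub>R (x - x0) + \<alpha> *\<^sub>R (y - x0)"
    by (simp add: algebra_simps)
  have e2: "y - x = (y - x0) - (x - x0)" by simp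
  show ?thesis unfolding e quad_identity0 e2[symmetric] by (simp add: field_simps)
qed

lemma sc_add_quad:
  fixes H :: "'a::real_inner \<Rightarrow> ereal"
  assumes sc: "strongly_convex_fun \<mu> H" and nm: "\<And>x. H x \<noteq> -\<infinity>"
  shows "strongly_convex_fun (n + \<mu>) (\<lambda>x. ereal (n/2 * (norm (x - x0))\<^sup>2 + inner c x + e) + H x)"
  unfolding strongly_convex_fun_def
proof (intro allI impI)
  fix x y :: 'a and \<alpha> :: real assume a: "0 < \<alpha> \<and> \<alpha> < 1"
  define Q where "Q = (\<lambda>x. n/2 * (norm (x - x0))\<^sup>2 + inner c x + e)"
  have Qid: "Q ((1 - \<alpha>) *\<^sub>R x + \<alpha> *\<^sub>R y) = (1 - \<alpha>) * Q x + \<alpha> * Q y - n / 2 * \<alpha> * (1 - \<alpha>) * (norm (y - x))\<^sup>2"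
    unfolding Q_def quad_identity by (simp add: inner_add_right algebra_simps)
  show "ereal (n/2 * (norm ((1 - \<alpha>) *\<^sub>R x + \<alpha> *\<^sub>R y - x0))\<^sup>2 + inner c ((1 - \<alpha>) *\<^sub>R x + \<alpha> *\<^sub>R y) + e)
        + H ((1 - \<alpha>) *\<^sub>R x + \<alpha> *\<^sub>R y)
        \<le> ereal (1 - \<alpha>) * (ereal (n/2 * (norm (x - x0))\<^sup>2 + inner c x + e) + H x)
          + ereal \<alpha> * (ereal (n/2 * (norm (y - x0))\<^sup>2 + inner c y + e) + H y)
          - ereal ((n + \<mu>) / 2 * \<alpha> * (1 - \<alpha>) * (norm (y - x))\<^sup>2)"
    (is "ereal (?Qm) + ?Hm \<le> ?R")
  proof (cases "H x = \<infinity> \<or> H y = \<infinity>")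
    case True
    then have "?R = \<infinity>" using a nm[of x] nm[of y] by auto
    then show ?thesis by simp
  next
    case False
    then obtain hx hy where hx: "H x = ereal hx" and hy: "H y = ereal hy"
      using nm[of x] nm[of y] by (cases "H x"; cases "H y") auto
    have Hm: "?Hm \<le> ereal (1 - \<alpha>) * H x + ereal \<alpha> * H y - ereal (\<mu> / 2 * \<alpha> * (1 - \<alpha>) * (norm (y - x))\<^sup>2)"
      using sc a unfolding strongly_convex_fun_def by blast
    then obtain hm where hm: "?Hm = ereal hm" using nm[of "(1 - \<alpha>) *\<^sub>R x + \<alpha> *\<^sub>R y"] hx hy
      by (cases ?Hm) auto
    have hm_le: "hm \<le> (1 - \<alpha>) * hx + \<alpha> * hy - \<mu> / 2 * \<alpha> * (1 - \<alpha>) * (norm (y - x))\<^sup>2"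
      using Hm hm hx hy by simp
    have "?Qm = Q ((1 - \<alpha>) *\<^sub>R x + \<alpha> *\<^sub>R y)" unfolding Q_def by simp
    moreover have "(n + \<mu>) / 2 * \<alpha> * (1 - \<alpha>) * (norm (y - x))\<^sup>2
       = n / 2 * \<alpha> * (1 - \<alpha>) * (norm (y - x))\<^sup>2 + \<mu> / 2 * \<alpha> * (1 - \<alpha>) * (norm (y - x))\<^sup>2"
      by (simp add: field_simps)
    moreover have "(1 - \<alpha>) * (Q x + hx) = (1 - \<alpha>) * Q x + (1 - \<alpha>) * hx"
      "\<alpha> * (Q y + hy) = \<alpha> * Q y + \<alpha> * hy" by (simp_all add: algebra_simps)
    ultimately have "?Qm + hm \<le> (1 - \<alpha>) * (Q x + hx) + \<alpha> * (Q y + hy) - (n + \<mu>) / 2 * \<alpha> * (1 - \<alpha>) * (norm (y - x))\<^sup>2"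
      using Qid hm_le by linarith
    then show ?thesis using hm hx hy unfolding Q_def by simp
  qed
qed

lemma lsc_add_cont:
  fixes H :: "'a::metric_space \<Rightarrow> ereal"
  assumes lsc: "lsc_fun H" and nm: "\<And>x. H x \<noteq> -\<infinity>" and Qc: "\<And>x. isCont Q x"
  shows "lsc_fun (\<lambda>x. ereal (Q x) + H x)"
  unfolding lsc_fun_def le_Liminf_iff
proof (intro allI impI)
  fix x and y :: ereal assume y: "y < ereal (Q x) + H x"
  show "\<forall>\<^sub>F z in at x. y < ereal (Q z) + H z"
  proof (cases y)
    case MInf
    have "-\<infinity> < ereal (Q z) + H z" for z by (cases "H z") (use nm[of z] in auto)
    then show ?thesis using MInf by (intro always_eventually allI) auto
  next
    case PInf then show ?thesis using y by simp
  next
    case (real c)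
    have "ereal (c - Q x) < H x" using y real by (cases "H x") auto
    then obtain c' where c': "ereal (c - Q x) < ereal c'" "ereal c' < H x" using ereal_dense2 by blast
    have ev1: "\<forall>\<^sub>F z in at x. ereal c' < H z"
      using lsc c'(2) unfolding lsc_fun_def le_Liminf_iff by blast
    have eps: "0 < c' - (c - Q x)" using c'(1) by simp
    have ev2: "\<forall>\<^sub>F z in at x. dist (Q z) (Q x) < c' - (c - Q x)"
      using Qc[of x] eps unfolding isCont_def by (rule tendstoD)
    show ?thesis
      using ev1 ev2
    proof eventually_elim
      case (elim z)
      have "c < Q z + c'" using elim(2) by (simp add: dist_real_def abs_less_iff)
      then show ?case using elim(1) real by (cases "H z") auto
    qed
  qed
qed

lemma lsc_scale:
  fixes g :: "'a::perfect_space \<Rightarrow> ereal"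
  assumes "lsc_fun g" "a \<ge> 0"
  shows "lsc_fun (\<lambda>x. ereal a * g x)"
  using assms unfolding lsc_fun_def
  by (simp add: Liminf_ereal_mult_left at_neq_bot ereal_mult_left_mono)

lemma sc_scale:
  fixes g :: "'a::real_normed_vector \<Rightarrow> ereal"
  assumes sc: "strongly_convex_fun \<mu> g" and nm: "\<And>x. g x \<noteq> -\<infinity>" and a: "a > 0"
  shows "strongly_convex_fun (a * \<mu>) (\<lambda>x. ereal a * g x)"
  unfolding strongly_convex_fun_def
proof (intro allI impI)
  fix x y :: 'a and \<alpha> :: real assume al: "0 < \<alpha> \<and> \<alpha> < 1"
  show "ereal a * g ((1 - \<alpha>) *\<^sub>R x + \<alpha> *\<^sub>R y)
        \<le> ereal (1 - \<alpha>) * (ereal a * g x) + ereal \<alpha> * (ereal a * g y)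
          - ereal (a * \<mu> / 2 * \<alpha> * (1 - \<alpha>) * (norm (y - x))\<^sup>2)"
  proof (cases "g x = \<infinity> \<or> g y = \<infinity>")
    case True
    then show ?thesis using a al nm[of x] nm[of y] by auto
  next
    case False
    then obtain hx hy where hx: "g x = ereal hx" and hy: "g y = ereal hy"
      using nm[of x] nm[of y] by (cases "g x"; cases "g y") auto
    have Hm: "g ((1 - \<alpha>) *\<^sub>R x + \<alpha> *\<^sub>R y) \<le> ereal (1 - \<alpha>) * g x + ereal \<alpha> * g y - ereal (\<mu> / 2 * \<alpha> * (1 - \<alpha>) * (norm (y - x))\<^sup>2)"
      using sc al unfolding strongly_convex_fun_def by blast
    then obtain hm where hm: "g ((1 - \<alpha>) *\<^sub>R x + \<alpha> *\<^sub>R y) = ereal hm" using nm[of "(1 - \<alpha>) *\<^sub>R x + \<alpha> *\<^sub>R y"] hx hy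
      by (cases "g ((1 - \<alpha>) *\<^sub>R x + \<alpha> *\<^sub>R y)") auto
    have "hm \<le> (1 - \<alpha>) * hx + \<alpha> * hy - \<mu> / 2 * \<alpha> * (1 - \<alpha>) * (norm (y - x))\<^sup>2"
      using Hm hm hx hy by simp
    then have "a * hm \<le> a * ((1 - \<alpha>) * hx + \<alpha> * hy - \<mu> / 2 * \<alpha> * (1 - \<alpha>) * (norm (y - x))\<^sup>2)"
      using a by (intro mult_left_mono) auto
    then show ?thesis using hm hx hy by (simp add: algebra_simps)
  qed
qed

lemma convex_sc0: "convex_fun g \<Longrightarrow> strongly_convex_fun 0 g"
  unfolding convex_fun_def strongly_convex_fun_def by (simp add: zero_ereal_def[symmetric])

lemma quad_argmin:
  fixes H :: "'a::euclidean_space \<Rightarrow> ereal"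
  assumes n: "n > 0" and mu: "\<mu> \<ge> 0" and lsc: "lsc_fun H" and sc: "strongly_convex_fun \<mu> H"
    and nm: "\<And>x. H x \<noteq> -\<infinity>" and p: "H p \<noteq> \<infinity>"
    and F: "F = (\<lambda>x. ereal (n/2 * (norm (x - x0))\<^sup>2 + inner c x + e) + H x)"
  shows "F (argmin_of F) \<noteq> \<infinity> \<and> F (argmin_of F) \<noteq> -\<infinity> \<and> (\<forall>w. F (argmin_of F) \<le> F w)
     \<and> (\<forall>y. F (argmin_of F) + ereal ((n + \<mu>)/2 * (norm (y - argmin_of F))\<^sup>2) \<le> F y)"
proof -
  have lscF: "lsc_fun F" unfolding F
    by (rule lsc_add_cont[OF lsc nm]) (intro continuous_intros)
  have scF: "strongly_convex_fun (n + \<mu>) F" unfolding F by (rule sc_add_quad[OF sc nm])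
  have nmF: "\<And>x. F x \<noteq> -\<infinity>" unfolding F using nm by simp
  have pF: "F p \<noteq> \<infinity>" unfolding F using p nm[of p] by simp
  obtain z where z: "F z \<noteq> \<infinity>" "\<forall>w. F z \<le> F w"
    using sc_min_exists[OF lscF scF _ nmF pF] n mu by auto
  have mn: "\<forall>w. F (argmin_of F) \<le> F w"
    unfolding argmin_of_def by (rule someI[of "\<lambda>x. \<forall>w. F x \<le> F w"]) (use z in blast)
  have fin: "F (argmin_of F) \<noteq> \<infinity>" using mn z(1) by (metis ereal_infty_less_eq(1))
  show ?thesis
    using fin nmF mn sc_min_growth[OF scF _ fin nmF] n mu by auto
qed


lemma stepsz_A: "snd (stepsz n \<sigma> R (Suc (Suc k))) = snd (stepsz n \<sigma> R (Suc k)) + fst (stepsz n \<sigma> R (Suc (Suc k)))"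
  by (cases k) (auto simp: Let_def split: prod.split)

lemma stepsz_pos:
  assumes n: "n \<ge> 2" and R: "R > 0" and s: "\<sigma> \<ge> 0"
  shows "0 < fst (stepsz n \<sigma> R (Suc k)) \<and> 0 < snd (stepsz n \<sigma> R (Suc k))"
proof (induction k rule: less_induct)
  case (less k)
  show ?case
  proof (cases k)
    case 0 then show ?thesis using n R by simp
  next
    case (Suc k1)
    show ?thesis
    proof (cases k1)
      case 0
      have p1: "0 < n / (2*R)" and p2: "0 < n / (2*R*(n-1))" using n R by auto
      have p3: "0 < n / (2*R) + n / (2*R*(n-1))" using add_pos_pos[OF p1 p2] .
      show ?thesis using n R Suc 0 p1 p3 by (simp add: Let_def)
    next
      case (Suc k2)
      obtain ak Ak where akA: "stepsz n \<sigma> R (Suc (Suc k2)) = (ak, Ak)" by (cases "stepsz n \<sigma> R (Suc (Suc k2))")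
      have "0 < ak \<and> 0 < Ak" using less[of "Suc k2"] Suc \<open>k = Suc k1\<close> akA by simp
      then have pos: "0 < min ((1 + 1 / (n - 1)) * ak) (sqrt (n * (n + \<sigma> * Ak)) / (2 * R))"
        using n R s by (auto intro!: mult_pos_pos add_pos_nonneg divide_pos_pos)
      then have "0 < Ak + min ((1 + 1 / (n - 1)) * ak) (sqrt (n * (n + \<sigma> * Ak)) / (2 * R))"
        using \<open>0 < ak \<and> 0 < Ak\<close> by linarith
      with pos show ?thesis using Suc \<open>k = Suc k1\<close> akA
        by (simp add: Let_def)
    qed
  qed
qed

lemma vrpda_cong:
  "(\<And>m. m \<le> k \<Longrightarrow> j m = j' m) \<Longrightarrow> vrpda b gs l \<sigma> R x0 y0 u v j k = vrpda b gs l \<sigma> R x0 y0 u v j' k"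
proof (induction k rule: less_induct)
  case (less k)
  show ?case
  proof (cases k)
    case 0 then show ?thesis by simp
  next
    case (Suc k1)
    show ?thesis
    proof (cases k1)
      case 0 then show ?thesis using Suc by simp
    next
      case (Suc k2)
      have e1: "vrpda b gs l \<sigma> R x0 y0 u v j (Suc k2) = vrpda b gs l \<sigma> R x0 y0 u v j' (Suc k2)"
        using less Suc \<open>k = Suc k1\<close> by simp
      have e2: "vrpda b gs l \<sigma> R x0 y0 u v j k2 = vrpda b gs l \<sigma> R x0 y0 u v j' k2"
        using less Suc \<open>k = Suc k1\<close> by simp
      have e3: "j (Suc (Suc k2)) = j' (Suc (Suc k2))" using less Suc \<open>k = Suc k1\<close> by simp
      show ?thesis unfolding \<open>k = Suc k1\<close> Suc vrpda.simps(3) e1 e2 e3 ..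
    qed
  qed
qed

context
  fixes b :: "'n::finite \<Rightarrow> real^'d" and gs :: "'n \<Rightarrow> real \<Rightarrow> ereal" and l :: "real^'d \<Rightarrow> ereal"
    and \<sigma> R :: real and x0 u :: "real^'d" and y0 v :: "real^'n"
begin

lemma step_facts:
  fixes j :: "nat \<Rightarrow> 'n" and k :: nat
  defines "S1 \<equiv> vrpda b gs l \<sigma> R x0 y0 u v j (Suc k)"
    and "S2 \<equiv> vrpda b gs l \<sigma> R x0 y0 u v j k"
    and "Sk \<equiv> vrpda b gs l \<sigma> R x0 y0 u v j (Suc (Suc k))"
    and "a \<equiv> fst (stepsz (real CARD('n)) \<sigma> R (Suc (Suc k)))"
    and "a' \<equiv> fst (stepsz (real CARD('n)) \<sigma> R (Suc k))"
    and "jk \<equiv> j (Suc (Suc k))"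
  shows "psis Sk = (\<lambda>y. psis S1 y + ereal a * (ereal (- inner (b jk) (xs S1 + (a' / a) *\<^sub>R (xs S1 - xs S2)) * (y $ jk - v $ jk)) + gs jk (y $ jk)))"
    and "ys Sk = argmin_of (psis Sk)"
    and "phis Sk = (\<lambda>x. phis S1 x + ereal a * (ereal (inner (x - u) (zs S1 + (ys Sk $ jk - ys S1 $ jk) *\<^sub>R b jk)) + l x))"
    and "xs Sk = argmin_of (phis Sk)"
    and "zs Sk = zs S1 + ((ys Sk $ jk - ys S1 $ jk) / real CARD('n)) *\<^sub>R b jk"
  unfolding assms by (simp_all add: Let_def)

lemma base_facts:
  fixes j :: "nat \<Rightarrow> 'n"
  defines "S \<equiv> vrpda b gs l \<sigma> R x0 y0 u v j (Suc 0)"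
    and "tpsi \<equiv> (\<lambda>y. ereal ((norm (y - y0))\<^sup>2 / 2)
                   + ereal (1 / (2 * R)) * (ereal (inner (- Bop b x0) (y - v)) + gstar gs y))"
  defines "tphi \<equiv> (\<lambda>x. ereal ((norm (x - x0))\<^sup>2 / 2)
                   + ereal (1 / (2 * R)) * (ereal (inner (x - u) (BTop b (argmin_of tpsi))) + l x))"
  shows "psis S = (\<lambda>y. ereal (real CARD('n)) * tpsi y)"
    and "ys S = argmin_of tpsi"
    and "zs S = BTop b (ys S)"
    and "phis S = (\<lambda>x. ereal (real CARD('n)) * tphi x)"
    and "xs S = argmin_of tphi"
  unfolding assms by (simp_all add: Let_def)

end


lemma norm_sq_vec: "(norm (x :: real^'n))\<^sup>2 = (\<Sum>i\<in>UNIV. (x $ i)\<^sup>2)"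
  unfolding power2_norm_eq_inner inner_vec_def by (simp add: power2_eq_square)

lemma sum_ereal_fin:
  fixes f :: "'a \<Rightarrow> ereal"
  assumes "finite A" "\<And>i. i \<in> A \<Longrightarrow> f i \<noteq> \<infinity> \<and> f i \<noteq> -\<infinity>"
  shows "sum f A = ereal (\<Sum>i\<in>A. real_of_ereal (f i))"
proof -
  have "sum f A = (\<Sum>i\<in>A. ereal (real_of_ereal (f i)))"
    using assms(2) by (intro sum.cong) (auto simp: ereal_real)
  then show ?thesis by simp
qed

lemma ereal_upd:
  fixes G :: ereal
  assumes "G \<noteq> -\<infinity>" "\<alpha> > 0" "a > 0"
  shows "ereal q + ereal \<alpha> * G + ereal a * (ereal L + G) = ereal (q + a * L) + ereal (\<alpha> + a) * G"
  using assms by (cases G) (auto simp: algebra_simps)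

lemma ereal_sum_nm:
  fixes G :: "'a \<Rightarrow> ereal"
  shows "finite A \<Longrightarrow> (\<And>i. i \<in> A \<Longrightarrow> G i \<noteq> -\<infinity>) \<Longrightarrow> sum G A \<noteq> -\<infinity>"
proof (induction A rule: finite_induct)
  case empty then show ?case by simp
next
  case (insert x F)
  then have "G x \<noteq> -\<infinity>" "sum G F \<noteq> -\<infinity>" by auto
  then show ?case using insert by (cases "G x"; cases "sum G F") auto
qed

lemma ereal_distrib2:
  fixes x y :: ereal
  assumes "x \<noteq> -\<infinity>" "y \<noteq> -\<infinity>" "t \<ge> 0"
  shows "ereal t * (x + y) = ereal t * x + ereal t * y"
  using assms by (cases x; cases y) (auto simp: algebra_simps)

lemma ereal_sum_distrib:
  fixes G :: "'a \<Rightarrow> ereal"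
  assumes "t \<ge> 0"
  shows "finite A \<Longrightarrow> (\<And>i. i \<in> A \<Longrightarrow> G i \<noteq> -\<infinity>) \<Longrightarrow> ereal t * sum G A = (\<Sum>i\<in>A. ereal t * G i)"
proof (induction A rule: finite_induct)
  case empty then show ?case by simp
next
  case (insert x F)
  have "G x \<noteq> -\<infinity>" "sum G F \<noteq> -\<infinity>" using insert ereal_sum_nm[of F G] by auto
  then show ?case using insert ereal_distrib2[OF _ _ assms] by simp
qed

lemma ereal_base:
  fixes G :: ereal
  assumes "G \<noteq> -\<infinity>" "N > 0" "t > 0"
  shows "ereal N * (ereal A + ereal t * (ereal L + G / ereal N)) = ereal (N * A + N * t * L) + ereal t * G"
  using assms by (cases G) (auto simp: algebra_simps)

lemma ereal_base2:
  fixes G :: ereal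
  assumes "G \<noteq> -\<infinity>" "N > 0" "t > 0"
  shows "ereal N * (ereal A + ereal t * (ereal L + G)) = ereal (N * A + N * t * L) + ereal (N * t) * G"
  using assms by (cases G) (auto simp: algebra_simps)

lemma argmin_scale:
  assumes "N > 0"
  shows "argmin_of (\<lambda>y. ereal N * f y) = argmin_of f"
proof -
  have "(ereal N * a \<le> ereal N * b) = (a \<le> b)" for a b
    using assms by (subst ereal_mult_le_mult_iff) auto
  then show ?thesis unfolding argmin_of_def by simp
qed

locale vr =
  fixes b :: "'n::finite \<Rightarrow> real^'d" and gs :: "'n \<Rightarrow> real \<Rightarrow> ereal" and l :: "real^'d \<Rightarrow> ereal"
    and \<sigma> R :: real and x0 u :: "real^'d" and y0 v :: "real^'n"
  assumes n2: "CARD('n) \<ge> 2" and R_pos: "R > 0"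
    and g_proper: "\<And>i. proper_fun (gs i)"
    and g_lsc: "\<And>i. lsc_fun (gs i)"
    and g_convex: "\<And>i. convex_fun (gs i)"
    and l_proper: "proper_fun l"
    and l_lsc: "lsc_fun l"
    and sigma_nonneg: "\<sigma> \<ge> 0"
    and l_strong: "strongly_convex_fun \<sigma> l"
begin

definition fco :: "('n \<Rightarrow> real) \<Rightarrow> ('n \<Rightarrow> real) \<Rightarrow> ('n \<Rightarrow> real) \<Rightarrow> 'n \<Rightarrow> real \<Rightarrow> ereal" where
  "fco c e \<alpha> i t = ereal (real CARD('n) / 2 * (t - y0 $ i)\<^sup>2 + c i * t + e i) + ereal (\<alpha> i) * gs i t"

definition psiR :: "('n \<Rightarrow> real) \<Rightarrow> ('n \<Rightarrow> real) \<Rightarrow> ('n \<Rightarrow> real) \<Rightarrow> real^'n \<Rightarrow> ereal" where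
  "psiR c e \<alpha> y = (\<Sum>i\<in>UNIV. fco c e \<alpha> i (y $ i))"

lemma Npos: "real CARD('n) > 0" using n2 by simp

lemma g_nm: "gs i t \<noteq> -\<infinity>" using g_proper[of i] unfolding proper_fun_def by blast

lemma fco_min:
  assumes a: "\<alpha> i > 0"
  shows "fco c e \<alpha> i (argmin_of (fco c e \<alpha> i)) \<noteq> \<infinity> \<and> fco c e \<alpha> i (argmin_of (fco c e \<alpha> i)) \<noteq> -\<infinity>
    \<and> (\<forall>t. fco c e \<alpha> i (argmin_of (fco c e \<alpha> i)) + ereal (real CARD('n) / 2 * (t - argmin_of (fco c e \<alpha> i))\<^sup>2)
           \<le> fco c e \<alpha> i t)"
proof -
  obtain p where p: "gs i p \<noteq> \<infinity>" using g_proper[of i] unfolding proper_fun_def by blast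
  have nm: "\<And>t. ereal (\<alpha> i) * gs i t \<noteq> -\<infinity>" using a g_nm by simp
  have lsc: "lsc_fun (\<lambda>t. ereal (\<alpha> i) * gs i t)" using lsc_scale[OF g_lsc[of i]] a by simp
  have sc: "strongly_convex_fun 0 (\<lambda>t. ereal (\<alpha> i) * gs i t)"
    using sc_scale[OF convex_sc0[OF g_convex[of i]] g_nm a] by simp
  have pp: "ereal (\<alpha> i) * gs i p \<noteq> \<infinity>" using p a g_nm[of i p] by simp
  have F: "fco c e \<alpha> i = (\<lambda>t. ereal (real CARD('n)/2 * (norm (t - y0 $ i))\<^sup>2 + inner (c i) t + e i) + ereal (\<alpha> i) * gs i t)"
    by (rule ext) (simp add: fco_def)
  from quad_argmin[OF Npos order.refl lsc sc nm pp F] show ?thesis by simp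
qed

lemma psiR_min:
  assumes a: "\<And>i. \<alpha> i > 0"
  shows "argmin_of (psiR c e \<alpha>) = (\<chi> i. argmin_of (fco c e \<alpha> i))"
    and "psiR c e \<alpha> (argmin_of (psiR c e \<alpha>)) \<noteq> \<infinity>"
    and "psiR c e \<alpha> (argmin_of (psiR c e \<alpha>)) \<noteq> -\<infinity>"
    and "\<And>y. psiR c e \<alpha> (argmin_of (psiR c e \<alpha>)) + ereal (real CARD('n) / 2 * (norm (y - argmin_of (psiR c e \<alpha>)))\<^sup>2)
            \<le> psiR c e \<alpha> y"
proof -
  define z where "z = (\<chi> i. argmin_of (fco c e \<alpha> i))"
  have fm: "\<And>i. fco c e \<alpha> i (z $ i) \<noteq> \<infinity> \<and> fco c e \<alpha> i (z $ i) \<noteq> -\<infinity>"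
    "\<And>i t. fco c e \<alpha> i (z $ i) + ereal (real CARD('n) / 2 * (t - z $ i)\<^sup>2) \<le> fco c e \<alpha> i t"
    using fco_min[OF a] unfolding z_def by auto
  define r where "r = (\<Sum>i\<in>UNIV. real_of_ereal (fco c e \<alpha> i (z $ i)))"
  have pz: "psiR c e \<alpha> z = ereal r" unfolding psiR_def r_def by (rule sum_ereal_fin) (use fm in auto)
  have growth: "psiR c e \<alpha> z + ereal (real CARD('n) / 2 * (norm (y - z))\<^sup>2) \<le> psiR c e \<alpha> y" for y
  proof -
    have "psiR c e \<alpha> z + ereal (real CARD('n) / 2 * (norm (y - z))\<^sup>2)
        = (\<Sum>i\<in>UNIV. fco c e \<alpha> i (z $ i) + ereal (real CARD('n) / 2 * (y $ i - z $ i)\<^sup>2))"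
      unfolding psiR_def sum.distrib sum_ereal norm_sq_vec by (simp add: sum_distrib_left)
    also have "\<dots> \<le> psiR c e \<alpha> y" unfolding psiR_def by (intro sum_mono fm(2))
    finally show ?thesis .
  qed
  have mn: "\<forall>w. psiR c e \<alpha> (argmin_of (psiR c e \<alpha>)) \<le> psiR c e \<alpha> w"
    unfolding argmin_of_def
  proof (rule someI[of "\<lambda>x. \<forall>w. psiR c e \<alpha> x \<le> psiR c e \<alpha> w" z], intro allI)
    fix w
    have "0 \<le> ereal (real CARD('n) / 2 * (norm (w - z))\<^sup>2)" using Npos by simp
    then have "psiR c e \<alpha> z \<le> psiR c e \<alpha> z + ereal (real CARD('n) / 2 * (norm (w - z))\<^sup>2)"
      by (rule add_increasing2) simp
    also have "\<dots> \<le> psiR c e \<alpha> w" by (rule growth)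
    finally show "psiR c e \<alpha> z \<le> psiR c e \<alpha> w" .
  qed
  have eq: "argmin_of (psiR c e \<alpha>) = z"
  proof -
    let ?w = "argmin_of (psiR c e \<alpha>)"
    have "psiR c e \<alpha> z + ereal (real CARD('n) / 2 * (norm (?w - z))\<^sup>2) \<le> psiR c e \<alpha> ?w"
      by (rule growth)
    also have "\<dots> \<le> psiR c e \<alpha> z" using mn by blast
    finally have "ereal r + ereal (real CARD('n) / 2 * (norm (?w - z))\<^sup>2) \<le> ereal r"
      unfolding pz .
    then have "real CARD('n) / 2 * (norm (?w - z))\<^sup>2 \<le> 0" by simp
    then have "(norm (?w - z))\<^sup>2 \<le> 0" using Npos by (simp add: mult_le_0_iff)
    then show ?thesis by simp
  qed
  show "argmin_of (psiR c e \<alpha>) = (\<chi> i. argmin_of (fco c e \<alpha> i))" using eq z_def by simp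
  show "psiR c e \<alpha> (argmin_of (psiR c e \<alpha>)) \<noteq> \<infinity>" "psiR c e \<alpha> (argmin_of (psiR c e \<alpha>)) \<noteq> -\<infinity>"
    using eq pz by auto
  show "\<And>y. psiR c e \<alpha> (argmin_of (psiR c e \<alpha>)) + ereal (real CARD('n) / 2 * (norm (y - argmin_of (psiR c e \<alpha>)))\<^sup>2)
            \<le> psiR c e \<alpha> y" using eq growth by simp
qed


definition phiR :: "real^'d \<Rightarrow> real \<Rightarrow> real \<Rightarrow> real^'d \<Rightarrow> ereal" where
  "phiR c e A x = ereal (real CARD('n) / 2 * (norm (x - x0))\<^sup>2 + inner c x + e) + ereal A * l x"

lemma l_nm: "l x \<noteq> -\<infinity>" using l_proper unfolding proper_fun_def by blast

lemma phiR_min: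
  assumes A: "A > 0"
  shows "phiR c e A (argmin_of (phiR c e A)) \<noteq> \<infinity> \<and> phiR c e A (argmin_of (phiR c e A)) \<noteq> -\<infinity>
    \<and> (\<forall>w. phiR c e A (argmin_of (phiR c e A)) \<le> phiR c e A w)
    \<and> (\<forall>y. phiR c e A (argmin_of (phiR c e A)) + ereal ((real CARD('n) + A * \<sigma>)/2 * (norm (y - argmin_of (phiR c e A)))\<^sup>2) \<le> phiR c e A y)"
proof -
  obtain p where p: "l p \<noteq> \<infinity>" using l_proper unfolding proper_fun_def by blast
  have nm: "\<And>t. ereal A * l t \<noteq> -\<infinity>" using A l_nm by simp
  have lsc: "lsc_fun (\<lambda>t. ereal A * l t)" using lsc_scale[OF l_lsc] A by simp
  have sc: "strongly_convex_fun (A * \<sigma>) (\<lambda>t. ereal A * l t)"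
    using sc_scale[OF l_strong l_nm A] by simp
  have pp: "ereal A * l p \<noteq> \<infinity>" using p A l_nm[of p] by simp
  have F: "phiR c e A = (\<lambda>t. ereal (real CARD('n)/2 * (norm (t - x0))\<^sup>2 + inner c t + e) + ereal A * l t)"
    by (rule ext) (simp add: phiR_def)
  have mu: "A * \<sigma> \<ge> 0" using A sigma_nonneg by simp
  from quad_argmin[OF Npos mu lsc sc nm pp F] show ?thesis .
qed

lemma psiR_upd:
  assumes "\<alpha> j > 0" "a > 0"
  shows "psiR c e \<alpha> y + ereal a * (ereal (- \<beta> * (y $ j - v $ j)) + gs j (y $ j))
    = psiR (c(j := c j - a * \<beta>)) (e(j := e j + a * \<beta> * v $ j)) (\<alpha>(j := \<alpha> j + a)) y"
proof -
  let ?c = "c(j := c j - a * \<beta>)" and ?e = "e(j := e j + a * \<beta> * v $ j)" and ?\<alpha> = "\<alpha>(j := \<alpha> j + a)"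
  have rest: "(\<Sum>i\<in>UNIV - {j}. fco ?c ?e ?\<alpha> i (y $ i)) = (\<Sum>i\<in>UNIV - {j}. fco c e \<alpha> i (y $ i))"
    by (intro sum.cong) (auto simp: fco_def)
  define q where "q = real CARD('n) / 2 * (y $ j - y0 $ j)\<^sup>2 + c j * y $ j + e j"
  define L where "L = - \<beta> * (y $ j - v $ j)"
  have e1: "real CARD('n) / 2 * (y $ j - y0 $ j)\<^sup>2 + (c j - a * \<beta>) * y $ j + (e j + a * \<beta> * v $ j) = q + a * L"
    unfolding q_def L_def by (simp add: algebra_simps)
  have "fco ?c ?e ?\<alpha> j (y $ j) = ereal (q + a * L) + ereal (\<alpha> j + a) * gs j (y $ j)"
    unfolding fco_def using e1 by simp
  also have "\<dots> = ereal q + ereal (\<alpha> j) * gs j (y $ j) + ereal a * (ereal L + gs j (y $ j))"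
    by (rule ereal_upd[OF g_nm assms, symmetric])
  also have "\<dots> = fco c e \<alpha> j (y $ j) + ereal a * (ereal (- \<beta> * (y $ j - v $ j)) + gs j (y $ j))"
    unfolding fco_def q_def L_def by simp
  finally have jj: "fco ?c ?e ?\<alpha> j (y $ j) = fco c e \<alpha> j (y $ j) + ereal a * (ereal (- \<beta> * (y $ j - v $ j)) + gs j (y $ j))" .
  show ?thesis unfolding psiR_def sum.remove[OF finite_class.finite_UNIV UNIV_I, of _ j] rest jj
    by (simp add: ac_simps)
qed

lemma phiR_upd:
  assumes "A > 0" "a > 0"
  shows "phiR c e A x + ereal a * (ereal (inner (x - u) w) + l x) = phiR (c + a *\<^sub>R w) (e - a * inner u w) (A + a) x"
proof -
  define q where "q = real CARD('n) / 2 * (norm (x - x0))\<^sup>2 + inner c x + e"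
  define L where "L = inner (x - u) w"
  have e1: "real CARD('n) / 2 * (norm (x - x0))\<^sup>2 + inner (c + a *\<^sub>R w) x + (e - a * inner u w) = q + a * L"
    unfolding q_def L_def by (simp add: algebra_simps inner_diff_left inner_add_left inner_commute)
  have "phiR (c + a *\<^sub>R w) (e - a * inner u w) (A + a) x = ereal (q + a * L) + ereal (A + a) * l x"
    unfolding phiR_def using e1 by simp
  also have "\<dots> = ereal q + ereal A * l x + ereal a * (ereal L + l x)"
    by (rule ereal_upd[OF l_nm assms, symmetric])
  finally show ?thesis unfolding phiR_def q_def L_def by simp
qed

lemma BTop_coord:
  assumes "\<And>i. i \<noteq> j \<Longrightarrow> y $ i = y' $ i"
  shows "BTop b y = BTop b y' + ((y $ j - y' $ j) / real CARD('n)) *\<^sub>R b j"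
proof -
  have "BTop b y - BTop b y' = (\<Sum>i\<in>UNIV. ((y $ i - y' $ i) / real CARD('n)) *\<^sub>R b i)"
    unfolding BTop_def by (simp add: sum_subtractf[symmetric] diff_divide_distrib scaleR_diff_left)
  also have "\<dots> = ((y $ j - y' $ j) / real CARD('n)) *\<^sub>R b j"
    by (subst sum.remove[OF finite_class.finite_UNIV UNIV_I, of _ j]) (auto simp: assms intro!: sum.neutral)
  finally show ?thesis by (simp add: algebra_simps)
qed

lemma base_psi_rep:
  "ereal (real CARD('n)) * (ereal ((norm (y - y0))\<^sup>2 / 2) + ereal (1 / (2 * R)) * (ereal (inner (- Bop b x0) (y - v)) + gstar gs y))
   = psiR (\<lambda>i. - (1 / (2 * R)) * inner (b i) x0) (\<lambda>i. (1 / (2 * R)) * inner (b i) x0 * v $ i) (\<lambda>i. 1 / (2 * R)) y"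
proof -
  define N where "N = real CARD('n)"
  define t where "t = 1 / (2 * R)"
  have N: "N > 0" using Npos N_def by simp
  have t: "t > 0" using R_pos t_def by simp
  define G where "G = (\<Sum>i\<in>UNIV. gs i (y $ i))"
  have Gnm: "G \<noteq> -\<infinity>" unfolding G_def by (rule ereal_sum_nm) (auto simp: g_nm)
  define r where "r = (\<lambda>i. N / 2 * (y $ i - y0 $ i)\<^sup>2 + (- t * inner (b i) x0) * y $ i + t * inner (b i) x0 * v $ i)"
  have lhs: "ereal N * (ereal ((norm (y - y0))\<^sup>2 / 2) + ereal t * (ereal (inner (- Bop b x0) (y - v)) + gstar gs y))
     = ereal (N * ((norm (y - y0))\<^sup>2 / 2) + N * t * inner (- Bop b x0) (y - v)) + ereal t * G"
    unfolding gstar_def G_def[symmetric] N_def[symmetric] by (rule ereal_base[OF Gnm N t])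
  have rhs: "psiR (\<lambda>i. - t * inner (b i) x0) (\<lambda>i. t * inner (b i) x0 * v $ i) (\<lambda>i. t) y = ereal (sum r UNIV) + ereal t * G"
    unfolding psiR_def fco_def G_def sum.distrib sum_ereal r_def N_def
    by (subst ereal_sum_distrib) (use t g_nm in auto)
  have real_eq: "N * ((norm (y - y0))\<^sup>2 / 2) + N * t * inner (- Bop b x0) (y - v) = sum r UNIV"
  proof -
    have 1: "N * ((norm (y - y0))\<^sup>2 / 2) = (\<Sum>i\<in>UNIV. N / 2 * (y $ i - y0 $ i)\<^sup>2)"
      unfolding norm_sq_vec sum_distrib_left[symmetric] by simp
    have 2: "N * t * inner (- Bop b x0) (y - v) = (\<Sum>i\<in>UNIV. (- t * inner (b i) x0) * y $ i + t * inner (b i) x0 * v $ i)"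
    proof -
      have "inner (- Bop b x0) (y - v) = (\<Sum>i\<in>UNIV. (- Bop b x0) $ i * (y - v) $ i)"
        by (simp add: inner_vec_def)
      also have "\<dots> = (\<Sum>i\<in>UNIV. - (inner (b i) x0 / N) * (y $ i - v $ i))"
        by (simp add: Bop_def N_def)
      finally have "N * t * inner (- Bop b x0) (y - v) = (\<Sum>i\<in>UNIV. N * t * (- (inner (b i) x0 / N) * (y $ i - v $ i)))"
        by (simp add: sum_distrib_left)
      also have "\<dots> = (\<Sum>i\<in>UNIV. (- t * inner (b i) x0) * y $ i + t * inner (b i) x0 * v $ i)"
        using N by (intro sum.cong) (auto simp: field_simps)
      finally show ?thesis .
    qed
    show ?thesis unfolding 1 2 r_def sum.distrib by (simp add: add.assoc)
  qed
  show ?thesis using lhs rhs real_eq unfolding N_def t_def by simp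
qed

lemma base_phi_rep:
  "ereal (real CARD('n)) * (ereal ((norm (x - x0))\<^sup>2 / 2) + ereal (1 / (2 * R)) * (ereal (inner (x - u) z) + l x))
   = phiR ((real CARD('n) / (2 * R)) *\<^sub>R z) (- (real CARD('n) / (2 * R)) * inner u z) (real CARD('n) / (2 * R)) x"
proof -
  have t: "1 / (2 * R) > 0" using R_pos by simp
  have e1: "real CARD('n) * ((norm (x - x0))\<^sup>2 / 2) + real CARD('n) / (2 * R) * inner (x - u) z
     = real CARD('n) / 2 * (norm (x - x0))\<^sup>2 + inner ((real CARD('n) / (2 * R)) *\<^sub>R z) x + (- (real CARD('n) / (2 * R)) * inner u z)"
  proof -
    have h1: "inner ((real CARD('n) / (2 * R)) *\<^sub>R z) x = real CARD('n) / (2 * R) * inner x z"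
      by (simp add: inner_commute)
    have h2: "inner (x - u) z = inner x z - inner u z" by (simp add: inner_diff_left)
    show ?thesis unfolding h1 h2 using R_pos by (simp add: field_simps)
  qed
  have e2: "real CARD('n) * (1 / (2 * R)) = real CARD('n) / (2 * R)" by simp
  show ?thesis unfolding phiR_def ereal_base2[OF l_nm Npos t] e2 e1 ..
qed

end


context vr begin

abbreviation V where "V j k \<equiv> vrpda b gs l \<sigma> R x0 y0 u v j k"

lemma a_pos: "0 < fst (stepsz (real CARD('n)) \<sigma> R (Suc k))" and A_pos: "0 < snd (stepsz (real CARD('n)) \<sigma> R (Suc k))"
  using stepsz_pos[of "real CARD('n)" R \<sigma> k] n2 R_pos sigma_nonneg by auto

lemma inv:
  "(\<exists>c e \<alpha>. (\<forall>i. \<alpha> i > 0) \<and> psis (V j (Suc k)) = psiR c e \<alpha>) \<and>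
   (\<exists>c e. phis (V j (Suc k)) = phiR c e (snd (stepsz (real CARD('n)) \<sigma> R (Suc k)))) \<and>
   zs (V j (Suc k)) = BTop b (ys (V j (Suc k))) \<and>
   ys (V j (Suc k)) = argmin_of (psis (V j (Suc k))) \<and>
   xs (V j (Suc k)) = argmin_of (phis (V j (Suc k)))"
proof (induction k)
  case 0
  note bf = base_facts[of b gs l \<sigma> R x0 y0 u v j]
  have p1: "psis (V j (Suc 0)) = psiR (\<lambda>i. - (1 / (2 * R)) * inner (b i) x0) (\<lambda>i. (1 / (2 * R)) * inner (b i) x0 * v $ i) (\<lambda>i. 1 / (2 * R))"
    unfolding bf(1) by (rule ext) (rule base_psi_rep)
  have p2: "phis (V j (Suc 0)) = phiR ((real CARD('n) / (2 * R)) *\<^sub>R BTop b (ys (V j (Suc 0)))) (- (real CARD('n) / (2 * R)) * inner u (BTop b (ys (V j (Suc 0))))) (real CARD('n) / (2 * R))"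
    unfolding bf(4) bf(2) by (rule ext) (rule base_phi_rep)
  have pos: "\<forall>i. (\<lambda>i. 1 / (2 * R)) i > 0" using R_pos by simp
  have sA: "snd (stepsz (real CARD('n)) \<sigma> R (Suc 0)) = real CARD('n) / (2 * R)" by simp
  have "ys (V j (Suc 0)) = argmin_of (psis (V j (Suc 0)))"
    unfolding bf(1) bf(2) argmin_scale[OF Npos] ..
  moreover have "xs (V j (Suc 0)) = argmin_of (phis (V j (Suc 0)))"
    unfolding bf(4) bf(5) argmin_scale[OF Npos] ..
  moreover have "\<exists>c e \<alpha>. (\<forall>i. \<alpha> i > 0) \<and> psis (V j (Suc 0)) = psiR c e \<alpha>"
    using p1 pos by (intro exI[of _ "\<lambda>i. - (1 / (2 * R)) * inner (b i) x0"]
        exI[of _ "\<lambda>i. (1 / (2 * R)) * inner (b i) x0 * v $ i"] exI[of _ "\<lambda>i. 1 / (2 * R)"]) simp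
  moreover have "\<exists>c e. phis (V j (Suc 0)) = phiR c e (snd (stepsz (real CARD('n)) \<sigma> R (Suc 0)))"
    unfolding sA using p2 by blast
  ultimately show ?case using bf(3) by blast
next
  case (Suc k)
  define S1 where "S1 = V j (Suc k)"
  define Sk where "Sk = V j (Suc (Suc k))"
  define a where "a = fst (stepsz (real CARD('n)) \<sigma> R (Suc (Suc k)))"
  define a' where "a' = fst (stepsz (real CARD('n)) \<sigma> R (Suc k))"
  define jk where "jk = j (Suc (Suc k))"
  define xbar where "xbar = xs S1 + (a' / a) *\<^sub>R (xs S1 - xs (V j k))"
  define \<beta> where "\<beta> = inner (b jk) xbar"
  note sf = step_facts[of b gs l \<sigma> R x0 y0 u v j k, folded S1_def Sk_def a_def a'_def jk_def, folded xbar_def]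
  have apos: "a > 0" unfolding a_def by (rule a_pos)
  obtain c e \<alpha> where ce: "\<forall>i. \<alpha> i > 0" "psis S1 = psiR c e \<alpha>" using Suc.IH S1_def by blast
  obtain cp ep where cep: "phis S1 = phiR cp ep (snd (stepsz (real CARD('n)) \<sigma> R (Suc k)))" using Suc.IH S1_def by blast
  have z1: "zs S1 = BTop b (ys S1)" and y1: "ys S1 = argmin_of (psis S1)" and x1: "xs S1 = argmin_of (phis S1)"
    using Suc.IH S1_def by auto
  define c' where "c' = c(jk := c jk - a * \<beta>)"
  define e' where "e' = e(jk := e jk + a * \<beta> * v $ jk)"
  define \<alpha>' where "\<alpha>' = \<alpha>(jk := \<alpha> jk + a)"
  have al': "\<forall>i. \<alpha>' i > 0" using ce(1) apos by (simp add: \<alpha>'_def add_pos_pos)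
  have psk: "psis Sk = psiR c' e' \<alpha>'"
    unfolding sf(1) ce(2) c'_def e'_def \<alpha>'_def \<beta>_def
    by (rule ext) (rule psiR_upd, use ce(1) apos in auto)
  have yk: "ys Sk = argmin_of (psis Sk)" by (rule sf(2))
  have coord: "ys Sk $ i = ys S1 $ i" if "i \<noteq> jk" for i
  proof -
    have "fco c' e' \<alpha>' i = fco c e \<alpha> i"
      using that by (intro ext) (simp add: fco_def c'_def e'_def \<alpha>'_def)
    then show ?thesis unfolding yk psk y1 ce(2) psiR_min(1)[OF ce(1)[rule_format]] psiR_min(1)[OF al'[rule_format]]
      by simp
  qed
  have zk: "zs Sk = BTop b (ys Sk)"
    unfolding sf(5) z1 using BTop_coord[of jk "ys Sk" "ys S1", OF coord] by simp
  have Aeq: "snd (stepsz (real CARD('n)) \<sigma> R (Suc (Suc k))) = snd (stepsz (real CARD('n)) \<sigma> R (Suc k)) + a"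
    unfolding a_def by (rule stepsz_A)
  have phk: "phis Sk = phiR (cp + a *\<^sub>R (zs S1 + (ys Sk $ jk - ys S1 $ jk) *\<^sub>R b jk))
      (ep - a * inner u (zs S1 + (ys Sk $ jk - ys S1 $ jk) *\<^sub>R b jk)) (snd (stepsz (real CARD('n)) \<sigma> R (Suc (Suc k))))"
    unfolding sf(3) cep Aeq by (rule ext) (rule phiR_upd[OF A_pos apos])
  show ?case using psk al' phk zk yk sf(4) unfolding Sk_def by blast
qed

end


lemma Bop_diff: "Bop b (x - y) = Bop b x - Bop b y"
  unfolding Bop_def by (simp add: vec_eq_iff inner_diff_right diff_divide_distrib)
lemma Bop_minus: "Bop b (- x) = - Bop b x"
  unfolding Bop_def by (simp add: vec_eq_iff)
lemma Bop_add: "Bop b (x + y) = Bop b x + Bop b y"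
  unfolding Bop_def by (simp add: vec_eq_iff inner_add_right add_divide_distrib)
lemma Bop_scale: "Bop b (c *\<^sub>R x) = c *\<^sub>R Bop b x"
  unfolding Bop_def by (simp add: vec_eq_iff)

lemma Bop_coord:
  fixes b :: "'n::finite \<Rightarrow> real^'d"
  assumes "\<And>i. i \<noteq> j \<Longrightarrow> yk $ i = y1 $ i"
  shows "inner (Bop b w) (yk - y1) = inner (b j) w * (yk $ j - y1 $ j) / real CARD('n)"
proof -
  have "inner (Bop b w) (yk - y1) = (\<Sum>i\<in>UNIV. (inner (b i) w / real CARD('n)) * (yk $ i - y1 $ i))"
    by (simp add: inner_vec_def Bop_def)
  also have "\<dots> = (inner (b j) w / real CARD('n)) * (yk $ j - y1 $ j)"
    by (subst sum.remove[OF finite_class.finite_UNIV UNIV_I, of _ j]) (auto simp: assms intro!: sum.neutral)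
  finally show ?thesis by simp
qed

lemma Bop_avg:
  fixes b :: "'n::finite \<Rightarrow> real^'d"
  shows "(\<Sum>i\<in>UNIV. inner (b i) w * (z $ i)) = real CARD('n) * inner (Bop b w) z"
  by (simp add: inner_vec_def Bop_def sum_distrib_left)

lemma lin_identity:
  fixes b :: "'n::finite \<Rightarrow> real^'d" and x1 x2 xk u :: "real^'d" and a a' :: real and yk y1 v :: "real^'n"
  assumes coord: "\<And>i. i \<noteq> j \<Longrightarrow> yk $ i = y1 $ i" and a: "a \<noteq> 0"
  defines "xbar \<equiv> x1 + (a' / a) *\<^sub>R (x1 - x2)"
  defines "N \<equiv> real CARD('n)"
  shows "a * (- inner (b j) xbar * (yk $ j - v $ j))
    = (a * inner (Bop b (xk - x1)) (yk - v)
                    - a' * inner (Bop b (x1 - x2)) (y1 - v)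
                    - N * a' * inner (Bop b (x1 - x2)) (yk - y1)
                    + a * inner (- Bop b xk) (yk - v)
                    - (N - 1) * a * (inner (Bop b (x1 - u)) (yk - y1)
                                      + inner (Bop b u) (yk - y1)))
      + a * (inner (Bop b xbar) (y1 - v) - inner (b j) xbar * (y1 $ j - v $ j))"
proof -
  have Npos: "N > 0" unfolding N_def by simp
  have sp: "yk - v = (yk - y1) + (y1 - v)" by simp
  define d where "d = yk $ j - y1 $ j"
  have C: "\<And>w. inner (Bop b w) (yk - y1) = inner (b j) w * d / N"
    unfolding d_def N_def by (rule Bop_coord[OF coord])
  define I where "I = (\<lambda>w. inner (Bop b w) (y1 - v))"
  define p where "p = (\<lambda>w. inner (b j) w)"
  have Il: "I (x - y) = I x - I y" "I (x + y) = I x + I y" "I (c *\<^sub>R x) = c * I x" for x y c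
    unfolding I_def by (simp_all add: Bop_diff Bop_add Bop_scale inner_diff_left inner_add_left)
  have pl: "p (x - y) = p x - p y" "p (x + y) = p x + p y" "p (c *\<^sub>R x) = c * p x" for x y c
    unfolding p_def by (simp_all add: inner_diff_right inner_add_right)
  have E1: "inner (Bop b w) (yk - v) = p w * d / N + I w" for w
    unfolding sp inner_add_right C I_def p_def ..
  have E2: "inner (- Bop b w) (yk - v) = - (p w * d / N + I w)" for w
    using E1[of w] by simp
  have Ieq: "inner (Bop b w) (y1 - v) = I w" for w by (simp add: I_def)
  have peq: "inner (b j) w = p w" for w by (simp add: p_def)
  have jv: "yk $ j - v $ j = d + (y1 $ j - v $ j)" unfolding d_def by simp
  show ?thesis
    unfolding E1 E2 C Ieq peq xbar_def Il pl jv
    using a Npos by (simp add: field_simps)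
qed


context vr begin

lemma psi_growth:
  "psis (V j (Suc k)) (ys (V j (Suc k))) \<noteq> \<infinity> \<and> psis (V j (Suc k)) (ys (V j (Suc k))) \<noteq> -\<infinity>
   \<and> (\<forall>y. psis (V j (Suc k)) (ys (V j (Suc k))) + ereal (real CARD('n) / 2 * (norm (y - ys (V j (Suc k))))\<^sup>2)
          \<le> psis (V j (Suc k)) y)"
proof -
  obtain c e \<alpha> where ce: "\<forall>i. \<alpha> i > 0" "psis (V j (Suc k)) = psiR c e \<alpha>" using inv[of j k] by blast
  have y: "ys (V j (Suc k)) = argmin_of (psiR c e \<alpha>)" using inv[of j k] ce by simp
  have al: "\<And>i. \<alpha> i > 0" using ce(1) by blast
  have h2: "psiR c e \<alpha> (argmin_of (psiR c e \<alpha>)) \<noteq> \<infinity>" by (rule psiR_min(2)) (rule al)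
  have h3: "psiR c e \<alpha> (argmin_of (psiR c e \<alpha>)) \<noteq> -\<infinity>" by (rule psiR_min(3)) (rule al)
  have h4: "\<forall>y. psiR c e \<alpha> (argmin_of (psiR c e \<alpha>)) + ereal (real CARD('n) / 2 * (norm (y - argmin_of (psiR c e \<alpha>)))\<^sup>2)
            \<le> psiR c e \<alpha> y" by (intro allI psiR_min(4)) (rule al)
  show ?thesis unfolding ce(2) y using h2 h3 h4 by blast
qed

lemma phi_growth:
  "phis (V j (Suc k)) (xs (V j (Suc k))) \<noteq> \<infinity> \<and> phis (V j (Suc k)) (xs (V j (Suc k))) \<noteq> -\<infinity>
   \<and> (\<forall>y. phis (V j (Suc k)) (xs (V j (Suc k)))
          + ereal ((real CARD('n) + snd (stepsz (real CARD('n)) \<sigma> R (Suc k)) * \<sigma>) / 2 * (norm (y - xs (V j (Suc k))))\<^sup>2)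
          \<le> phis (V j (Suc k)) y)"
proof -
  obtain c e where ce: "phis (V j (Suc k)) = phiR c e (snd (stepsz (real CARD('n)) \<sigma> R (Suc k)))" using inv[of j k] by blast
  have x: "xs (V j (Suc k)) = argmin_of (phiR c e (snd (stepsz (real CARD('n)) \<sigma> R (Suc k))))" using inv[of j k] ce by simp
  show ?thesis unfolding ce x using phiR_min[OF A_pos] by blast
qed

lemma coord_step:
  assumes "i \<noteq> j (Suc (Suc k))"
  shows "ys (V j (Suc (Suc k))) $ i = ys (V j (Suc k)) $ i"
proof -
  define S1 where "S1 = V j (Suc k)"
  define Sk where "Sk = V j (Suc (Suc k))"
  define a where "a = fst (stepsz (real CARD('n)) \<sigma> R (Suc (Suc k)))"
  define a' where "a' = fst (stepsz (real CARD('n)) \<sigma> R (Suc k))"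
  define jk where "jk = j (Suc (Suc k))"
  define xbar where "xbar = xs S1 + (a' / a) *\<^sub>R (xs S1 - xs (V j k))"
  define \<beta> where "\<beta> = inner (b jk) xbar"
  note sf = step_facts[of b gs l \<sigma> R x0 y0 u v j k, folded S1_def Sk_def a_def a'_def jk_def, folded xbar_def]
  have apos: "a > 0" unfolding a_def by (rule a_pos)
  obtain c e \<alpha> where ce: "\<forall>i. \<alpha> i > 0" "psis S1 = psiR c e \<alpha>" using inv[of j k] S1_def by blast
  have y1: "ys S1 = argmin_of (psis S1)" using inv[of j k] S1_def by auto
  define c' where "c' = c(jk := c jk - a * \<beta>)"
  define e' where "e' = e(jk := e jk + a * \<beta> * v $ jk)"
  define \<alpha>' where "\<alpha>' = \<alpha>(jk := \<alpha> jk + a)"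
  have al': "\<forall>i. \<alpha>' i > 0" using ce(1) apos by (simp add: \<alpha>'_def add_pos_pos)
  have psk: "psis Sk = psiR c' e' \<alpha>'"
    unfolding sf(1) ce(2) c'_def e'_def \<alpha>'_def \<beta>_def
    by (rule ext) (rule psiR_upd, use ce(1) apos in auto)
  have yk: "ys Sk = argmin_of (psis Sk)" by (rule sf(2))
  have "fco c' e' \<alpha>' i = fco c e \<alpha> i"
    using assms by (intro ext) (simp add: fco_def c'_def e'_def \<alpha>'_def jk_def)
  then show ?thesis unfolding Sk_def[symmetric] S1_def[symmetric] yk psk y1 ce(2)
      psiR_min(1)[OF ce(1)[rule_format]] psiR_min(1)[OF al'[rule_format]]
    by simp
qed

definition Dterm :: "(nat \<Rightarrow> 'n) \<Rightarrow> nat \<Rightarrow> real" where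
  "Dterm js k = (let S1 = V js (Suc k); S2 = V js k;
      a = fst (stepsz (real CARD('n)) \<sigma> R (Suc (Suc k)));
      a' = fst (stepsz (real CARD('n)) \<sigma> R (Suc k));
      xbar = xs S1 + (a' / a) *\<^sub>R (xs S1 - xs S2);
      jk = js (Suc (Suc k))
    in a * (inner (Bop b xbar) (ys S1 - v) - inner (b jk) xbar * (ys S1 $ jk - v $ jk)))"


lemma psi_pw:
  assumes k2: "k \<ge> 2"
  shows "(let n = real CARD('n);
            Sk = vrpda b gs l \<sigma> R x0 y0 u v js k;
            S1 = vrpda b gs l \<sigma> R x0 y0 u v js (k - 1);
            S2 = vrpda b gs l \<sigma> R x0 y0 u v js (k - 2);
            ak = fst (stepsz n \<sigma> R k);
            ak1 = fst (stepsz n \<sigma> R (k - 1));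
            jk = js k
        in psis S1 (ys S1) + ereal (n / 2 * (norm (ys Sk - ys S1))\<^sup>2)
           + ereal ak * gs jk (ys Sk $ jk)
           + ereal (ak * inner (Bop b (xs Sk - xs S1)) (ys Sk - v)
                    - ak1 * inner (Bop b (xs S1 - xs S2)) (ys S1 - v)
                    - n * ak1 * inner (Bop b (xs S1 - xs S2)) (ys Sk - ys S1)
                    + ak * inner (- Bop b (xs Sk)) (ys Sk - v)
                    - (n - 1) * ak * (inner (Bop b (xs S1 - u)) (ys Sk - ys S1)
                                      + inner (Bop b u) (ys Sk - ys S1))))
       + ereal (Dterm js (k - 2))
       \<le> psis (vrpda b gs l \<sigma> R x0 y0 u v js k) (ys (vrpda b gs l \<sigma> R x0 y0 u v js k))"
proof -
  obtain k' where kk: "k = Suc (Suc k')" using k2 by (metis add_2_eq_Suc le_Suc_ex)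
  have k1: "k - 1 = Suc k'" "k - 2 = k'" using kk by auto
  define N where "N = real CARD('n)"
  define S1 where "S1 = V js (Suc k')"
  define S2 where "S2 = V js k'"
  define Sk where "Sk = V js (Suc (Suc k'))"
  define a where "a = fst (stepsz (real CARD('n)) \<sigma> R (Suc (Suc k')))"
  define a' where "a' = fst (stepsz (real CARD('n)) \<sigma> R (Suc k'))"
  define jk where "jk = js (Suc (Suc k'))"
  define xbar where "xbar = xs S1 + (a' / a) *\<^sub>R (xs S1 - xs S2)"
  note sf = step_facts[of b gs l \<sigma> R x0 y0 u v js k', folded S1_def S2_def Sk_def a_def a'_def jk_def, folded xbar_def]
  have apos: "a > 0" unfolding a_def by (rule a_pos)
  have coord: "\<And>i. i \<noteq> jk \<Longrightarrow> ys Sk $ i = ys S1 $ i"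
    unfolding Sk_def S1_def jk_def by (rule coord_step)
  have D: "Dterm js k' = a * (inner (Bop b xbar) (ys S1 - v) - inner (b jk) xbar * (ys S1 $ jk - v $ jk))"
    unfolding Dterm_def Let_def S1_def S2_def a_def a'_def xbar_def jk_def ..
  have lin: "a * (- inner (b jk) xbar * (ys Sk $ jk - v $ jk))
    = (a * inner (Bop b (xs Sk - xs S1)) (ys Sk - v)
                    - a' * inner (Bop b (xs S1 - xs S2)) (ys S1 - v)
                    - N * a' * inner (Bop b (xs S1 - xs S2)) (ys Sk - ys S1)
                    + a * inner (- Bop b (xs Sk)) (ys Sk - v)
                    - (N - 1) * a * (inner (Bop b (xs S1 - u)) (ys Sk - ys S1)
                                      + inner (Bop b u) (ys Sk - ys S1)))
      + a * (inner (Bop b xbar) (ys S1 - v) - inner (b jk) xbar * (ys S1 $ jk - v $ jk))"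
    unfolding xbar_def N_def by (rule lin_identity[OF coord]) (use apos in simp_all)
  define Lin where "Lin = a * inner (Bop b (xs Sk - xs S1)) (ys Sk - v)
                    - a' * inner (Bop b (xs S1 - xs S2)) (ys S1 - v)
                    - N * a' * inner (Bop b (xs S1 - xs S2)) (ys Sk - ys S1)
                    + a * inner (- Bop b (xs Sk)) (ys Sk - v)
                    - (N - 1) * a * (inner (Bop b (xs S1 - u)) (ys Sk - ys S1)
                                      + inner (Bop b u) (ys Sk - ys S1))"
  define Dv where "Dv = a * (inner (Bop b xbar) (ys S1 - v) - inner (b jk) xbar * (ys S1 $ jk - v $ jk))"
  have lin': "a * (- inner (b jk) xbar * (ys Sk $ jk - v $ jk)) = Lin + Dv"
    unfolding Lin_def Dv_def by (rule lin)
  have PSk: "psis Sk (ys Sk) = psis S1 (ys Sk) + ereal a * (ereal (- inner (b jk) xbar * (ys Sk $ jk - v $ jk)) + gs jk (ys Sk $ jk))"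
    unfolding sf(1) ..
  note g1 = psi_growth[of js k', folded S1_def]
  note gk = psi_growth[of js "Suc k'", folded Sk_def]
  obtain P1 where P1: "psis S1 (ys S1) = ereal P1" using g1 by (cases "psis S1 (ys S1)") auto
  have grow: "ereal P1 + ereal (N / 2 * (norm (ys Sk - ys S1))\<^sup>2) \<le> psis S1 (ys Sk)"
    using g1 P1 N_def by metis
  have Ynm: "psis S1 (ys Sk) \<noteq> -\<infinity>" using grow by auto
  have gnm: "gs jk (ys Sk $ jk) \<noteq> -\<infinity>" by (rule g_nm)
  have fin: "psis Sk (ys Sk) \<noteq> \<infinity>" using gk by blast
  obtain Y where Y: "psis S1 (ys Sk) = ereal Y"
  proof (cases "psis S1 (ys Sk)")
    case PInf
    then have "psis Sk (ys Sk) = \<infinity>" unfolding PSk using apos gnm by (cases "gs jk (ys Sk $ jk)") auto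
    with fin show ?thesis by simp
  qed (use Ynm in auto)
  obtain G where G: "gs jk (ys Sk $ jk) = ereal G"
  proof (cases "gs jk (ys Sk $ jk)")
    case PInf
    then have "psis Sk (ys Sk) = \<infinity>" unfolding PSk using apos Y by simp
    with fin show ?thesis by simp
  qed (use gnm in auto)
  have growr: "P1 + N / 2 * (norm (ys Sk - ys S1))\<^sup>2 \<le> Y" using grow Y by simp
  have main: "P1 + N / 2 * (norm (ys Sk - ys S1))\<^sup>2 + a * G + Lin + Dv
      \<le> Y + a * (- inner (b jk) xbar * (ys Sk $ jk - v $ jk) + G)"
    using growr lin' by (simp add: algebra_simps)
  have final: "psis S1 (ys S1) + ereal (N / 2 * (norm (ys Sk - ys S1))\<^sup>2) + ereal a * gs jk (ys Sk $ jk)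
      + ereal Lin + ereal Dv \<le> psis Sk (ys Sk)"
    unfolding PSk P1 Y G using main by simp
  show ?thesis using final
    unfolding Let_def k1 unfolding kk D Lin_def Dv_def xbar_def S1_def S2_def Sk_def a_def a'_def jk_def N_def .
qed


lemma phi_pw:
  assumes k2: "k \<ge> 2"
  shows "(let n = real CARD('n);
            Sk = vrpda b gs l \<sigma> R x0 y0 u v js k;
            S1 = vrpda b gs l \<sigma> R x0 y0 u v js (k - 1);
            ak = fst (stepsz n \<sigma> R k);
            Ak1 = snd (stepsz n \<sigma> R (k - 1))
        in phis S1 (xs S1) + ereal ((n + \<sigma> * Ak1) / 2 * (norm (xs Sk - xs S1))\<^sup>2)
           + ereal ak * (ereal (inner (xs Sk - u) (BTop b (ys Sk))
                                + (n - 1) * inner (xs Sk - u) (BTop b (ys Sk - ys S1)))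
                         + l (xs Sk)))
       \<le> phis (vrpda b gs l \<sigma> R x0 y0 u v js k) (xs (vrpda b gs l \<sigma> R x0 y0 u v js k))"
proof -
  obtain k' where kk: "k = Suc (Suc k')" using k2 by (metis add_2_eq_Suc le_Suc_ex)
  have k1: "k - 1 = Suc k'" using kk by auto
  define N where "N = real CARD('n)"
  define S1 where "S1 = V js (Suc k')"
  define Sk where "Sk = V js (Suc (Suc k'))"
  define a where "a = fst (stepsz (real CARD('n)) \<sigma> R (Suc (Suc k')))"
  define A1 where "A1 = snd (stepsz (real CARD('n)) \<sigma> R (Suc k'))"
  define jk where "jk = js (Suc (Suc k'))"
  note sf = step_facts[of b gs l \<sigma> R x0 y0 u v js k', folded S1_def Sk_def a_def jk_def]
  have coord: "\<And>i. i \<noteq> jk \<Longrightarrow> ys Sk $ i = ys S1 $ i"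
    unfolding Sk_def S1_def jk_def by (rule coord_step)
  have z1: "zs S1 = BTop b (ys S1)" using inv[of js k'] S1_def by simp
  define d where "d = ys Sk $ jk - ys S1 $ jk"
  have Npos': "N > 0" unfolding N_def by simp
  have B1: "BTop b (ys Sk) = BTop b (ys S1) + (d / N) *\<^sub>R b jk"
    unfolding d_def N_def by (rule BTop_coord[OF coord])
  have B0: "BTop b (0::real^'n) = 0" by (simp add: BTop_def)
  have B2: "BTop b (ys Sk - ys S1) = (d / N) *\<^sub>R b jk"
    using BTop_coord[of jk "ys Sk - ys S1" 0] coord unfolding B0 d_def N_def by simp
  have sc: "d *\<^sub>R b jk = (d / N) *\<^sub>R b jk + ((N - 1) * (d / N)) *\<^sub>R b jk"
    using Npos' by (simp add: scaleR_add_left[symmetric] field_simps)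
  have w: "zs S1 + d *\<^sub>R b jk = BTop b (ys Sk) + (N - 1) *\<^sub>R BTop b (ys Sk - ys S1)"
    unfolding z1 B1 B2 sc by (simp add: algebra_simps)
  have ip: "inner (xs Sk - u) (zs S1 + d *\<^sub>R b jk)
     = inner (xs Sk - u) (BTop b (ys Sk)) + (N - 1) * inner (xs Sk - u) (BTop b (ys Sk - ys S1))"
    unfolding w by (simp add: inner_add_right)
  have PK: "phis Sk (xs Sk) = phis S1 (xs Sk) + ereal a * (ereal (inner (xs Sk - u) (zs S1 + d *\<^sub>R b jk)) + l (xs Sk))"
    unfolding sf(3) d_def ..
  have grow: "phis S1 (xs S1) + ereal ((N + A1 * \<sigma>) / 2 * (norm (xs Sk - xs S1))\<^sup>2) \<le> phis S1 (xs Sk)"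
    using phi_growth[of js k'] unfolding S1_def[symmetric] A1_def[symmetric] unfolding N_def[symmetric] by blast
  have final: "phis S1 (xs S1) + ereal ((N + \<sigma> * A1) / 2 * (norm (xs Sk - xs S1))\<^sup>2)
      + ereal a * (ereal (inner (xs Sk - u) (BTop b (ys Sk)) + (N - 1) * inner (xs Sk - u) (BTop b (ys Sk - ys S1)))
                   + l (xs Sk)) \<le> phis Sk (xs Sk)"
    unfolding PK ip using grow by (simp add: mult.commute add_right_mono)
  show ?thesis using final unfolding Let_def k1 unfolding kk S1_def Sk_def a_def A1_def N_def .
qed


lemma Dterm_upd:
  "Dterm (g(Suc (Suc k) := y)) k = (let S1 = V g (Suc k); S2 = V g k;
      a = fst (stepsz (real CARD('n)) \<sigma> R (Suc (Suc k)));
      a' = fst (stepsz (real CARD('n)) \<sigma> R (Suc k));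
      xbar = xs S1 + (a' / a) *\<^sub>R (xs S1 - xs S2)
    in a * (inner (Bop b xbar) (ys S1 - v) - inner (b y) xbar * (ys S1 $ y - v $ y)))"
proof -
  have e1: "V (g(Suc (Suc k) := y)) (Suc k) = V g (Suc k)" by (rule vrpda_cong) simp
  have e2: "V (g(Suc (Suc k) := y)) k = V g k" by (rule vrpda_cong) simp
  show ?thesis unfolding Dterm_def e1 e2 by simp
qed

lemma Dterm_sum: "(\<Sum>y\<in>UNIV. Dterm (g(Suc (Suc k) := y)) k) = 0"
proof -
  define S1 where "S1 = V g (Suc k)"
  define a where "a = fst (stepsz (real CARD('n)) \<sigma> R (Suc (Suc k)))"
  define a' where "a' = fst (stepsz (real CARD('n)) \<sigma> R (Suc k))"
  define xbar where "xbar = xs S1 + (a' / a) *\<^sub>R (xs S1 - xs (V g k))"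
  have "(\<Sum>y\<in>UNIV. Dterm (g(Suc (Suc k) := y)) k)
      = (\<Sum>y\<in>UNIV. a * (inner (Bop b xbar) (ys S1 - v) - inner (b y) xbar * ((ys S1 - v) $ y)))"
    unfolding Dterm_upd Let_def S1_def a_def a'_def xbar_def by simp
  also have "\<dots> = a * (real CARD('n) * inner (Bop b xbar) (ys S1 - v) - (\<Sum>y\<in>UNIV. inner (b y) xbar * ((ys S1 - v) $ y)))"
    by (simp add: sum_distrib_left[symmetric] sum_subtractf)
  also have "\<dots> = 0" unfolding Bop_avg by simp
  finally show ?thesis .
qed

lemma sum_D_zero:
  assumes k2: "k \<ge> 2"
  shows "(\<Sum>js\<in>PiE {2..k} (\<lambda>_. UNIV). Dterm js (k - 2)) = 0"
proof -
  obtain k' where kk: "k = Suc (Suc k')" using k2 by (metis add_2_eq_Suc le_Suc_ex)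
  have ins: "{2..k} = insert (Suc (Suc k')) {2..Suc k'}" using kk by auto
  have nin: "Suc (Suc k') \<notin> {2..Suc k'}" by simp
  have "(\<Sum>js\<in>PiE {2..k} (\<lambda>_. UNIV). Dterm js (k - 2))
      = (\<Sum>js\<in>(\<lambda>(y, g). g(Suc (Suc k') := y)) ` (UNIV \<times> PiE {2..Suc k'} (\<lambda>_. UNIV)). Dterm js k')"
    unfolding ins PiE_insert_eq using kk by simp
  also have "\<dots> = (\<Sum>(y, g)\<in>UNIV \<times> PiE {2..Suc k'} (\<lambda>_. UNIV). Dterm (g(Suc (Suc k') := y)) k')"
    by (subst sum.reindex[OF inj_combinator[OF nin]]) (simp add: case_prod_unfold)
  also have "\<dots> = (\<Sum>g\<in>PiE {2..Suc k'} (\<lambda>_. UNIV). \<Sum>y\<in>UNIV. Dterm (g(Suc (Suc k') := y)) k')"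
    by (subst sum.cartesian_product[symmetric]) (subst sum.swap, simp)
  also have "\<dots> = 0" by (simp add: Dterm_sum)
  finally show ?thesis .
qed

end


theorem lemma5:
  fixes b :: "'n::finite \<Rightarrow> real^'d"
    and gs :: "'n \<Rightarrow> real \<Rightarrow> ereal"
    and l :: "real^'d \<Rightarrow> ereal"
    and \<sigma> R :: real
    and x0 u :: "real^'d" and y0 v :: "real^'n"
    and k :: nat
  assumes n2: "CARD('n) \<ge> 2"
    and R_pos: "R > 0"
    and b_bound: "\<And>i. norm (b i) \<le> R"
    and g_proper: "\<And>i. proper_fun (gs i)"
    and g_lsc: "\<And>i. lsc_fun (gs i)"
    and g_convex: "\<And>i. convex_fun (gs i)"
    and l_proper: "proper_fun l"
    and l_lsc: "lsc_fun l"
    and sigma_nonneg: "\<sigma> \<ge> 0"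
    and l_strong: "strongly_convex_fun \<sigma> l"
    and x0_dom: "l x0 \<noteq> \<infinity>" and y0_dom: "gstar gs y0 \<noteq> \<infinity>"
    and u_dom: "l u \<noteq> \<infinity>" and v_dom: "gstar gs v \<noteq> \<infinity>"
    and k2: "k \<ge> 2"
  shows
   "expect_upto k (\<lambda>js. psis (vrpda b gs l \<sigma> R x0 y0 u v js k) (ys (vrpda b gs l \<sigma> R x0 y0 u v js k)))
    \<ge> expect_upto k (\<lambda>js.
        let n = real CARD('n);
            Sk = vrpda b gs l \<sigma> R x0 y0 u v js k;
            S1 = vrpda b gs l \<sigma> R x0 y0 u v js (k - 1);
            S2 = vrpda b gs l \<sigma> R x0 y0 u v js (k - 2);
            ak = fst (stepsz n \<sigma> R k);
            ak1 = fst (stepsz n \<sigma> R (k - 1));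
            jk = js k
        in psis S1 (ys S1) + ereal (n / 2 * (norm (ys Sk - ys S1))\<^sup>2)
           + ereal ak * gs jk (ys Sk $ jk)
           + ereal (ak * inner (Bop b (xs Sk - xs S1)) (ys Sk - v)
                    - ak1 * inner (Bop b (xs S1 - xs S2)) (ys S1 - v)
                    - n * ak1 * inner (Bop b (xs S1 - xs S2)) (ys Sk - ys S1)
                    + ak * inner (- Bop b (xs Sk)) (ys Sk - v)
                    - (n - 1) * ak * (inner (Bop b (xs S1 - u)) (ys Sk - ys S1)
                                      + inner (Bop b u) (ys Sk - ys S1))))
   \<and> expect_upto k (\<lambda>js. phis (vrpda b gs l \<sigma> R x0 y0 u v js k) (xs (vrpda b gs l \<sigma> R x0 y0 u v js k)))
    \<ge> expect_upto k (\<lambda>js.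
        let n = real CARD('n);
            Sk = vrpda b gs l \<sigma> R x0 y0 u v js k;
            S1 = vrpda b gs l \<sigma> R x0 y0 u v js (k - 1);
            ak = fst (stepsz n \<sigma> R k);
            Ak1 = snd (stepsz n \<sigma> R (k - 1))
        in phis S1 (xs S1) + ereal ((n + \<sigma> * Ak1) / 2 * (norm (xs Sk - xs S1))\<^sup>2)
           + ereal ak * (ereal (inner (xs Sk - u) (BTop b (ys Sk))
                                + (n - 1) * inner (xs Sk - u) (BTop b (ys Sk - ys S1)))
                         + l (xs Sk)))"
proof -
  interpret vr b gs l \<sigma> R x0 u y0 v
    using n2 R_pos g_proper g_lsc g_convex l_proper l_lsc sigma_nonneg l_strong by unfold_locales
  have cpos: "0 < ereal (real (card (PiE {2..k} (\<lambda>_. (UNIV :: 'n set)))))"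
    by (simp add: card_PiE)
  show ?thesis
    unfolding expect_upto_def
  proof (intro conjI ereal_divide_right_mono cpos)
    show "(\<Sum>js\<in>PiE {2..k} (\<lambda>_. UNIV). let n = real CARD('n);
            Sk = vrpda b gs l \<sigma> R x0 y0 u v js k;
            S1 = vrpda b gs l \<sigma> R x0 y0 u v js (k - 1);
            S2 = vrpda b gs l \<sigma> R x0 y0 u v js (k - 2);
            ak = fst (stepsz n \<sigma> R k);
            ak1 = fst (stepsz n \<sigma> R (k - 1));
            jk = js k
        in psis S1 (ys S1) + ereal (n / 2 * (norm (ys Sk - ys S1))\<^sup>2)
           + ereal ak * gs jk (ys Sk $ jk)
           + ereal (ak * inner (Bop b (xs Sk - xs S1)) (ys Sk - v)
                    - ak1 * inner (Bop b (xs S1 - xs S2)) (ys S1 - v)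
                    - n * ak1 * inner (Bop b (xs S1 - xs S2)) (ys Sk - ys S1)
                    + ak * inner (- Bop b (xs Sk)) (ys Sk - v)
                    - (n - 1) * ak * (inner (Bop b (xs S1 - u)) (ys Sk - ys S1)
                                      + inner (Bop b u) (ys Sk - ys S1))))
      \<le> (\<Sum>js\<in>PiE {2..k} (\<lambda>_. UNIV). psis (vrpda b gs l \<sigma> R x0 y0 u v js k) (ys (vrpda b gs l \<sigma> R x0 y0 u v js k)))"
      apply (rule order_trans[rotated], rule sum_mono, rule psi_pw[OF k2])
      apply (simp only: sum.distrib sum_ereal sum_D_zero[OF k2])
      apply simp
      done
    show "(\<Sum>js\<in>PiE {2..k} (\<lambda>_. UNIV). let n = real CARD('n);
            Sk = vrpda b gs l \<sigma> R x0 y0 u v js k;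
            S1 = vrpda b gs l \<sigma> R x0 y0 u v js (k - 1);
            ak = fst (stepsz n \<sigma> R k);
            Ak1 = snd (stepsz n \<sigma> R (k - 1))
        in phis S1 (xs S1) + ereal ((n + \<sigma> * Ak1) / 2 * (norm (xs Sk - xs S1))\<^sup>2)
           + ereal ak * (ereal (inner (xs Sk - u) (BTop b (ys Sk))
                                + (n - 1) * inner (xs Sk - u) (BTop b (ys Sk - ys S1)))
                         + l (xs Sk)))
      \<le> (\<Sum>js\<in>PiE {2..k} (\<lambda>_. UNIV). phis (vrpda b gs l \<sigma> R x0 y0 u v js k) (xs (vrpda b gs l \<sigma> R x0 y0 u v js k)))"
      by (rule sum_mono, rule phi_pw[OF k2])
  qed
qed

end
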